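(* Let $\diamond\in\{\square,\text{horizontal domino}\}$, $L\ge 0$, $\lambda$ a partition. For all sufficiently large $n$ (with $N=2n$) and every $b\in\mathcal M_\diamond(L,\lambda)$, with $T,Q,P$ the DDF data of $b$ and $\check d\otimes c$ the VXR data of $b$: (1) for each $i\in\{1,\dots,L\}$, $i$ lies in row $c_i$ of $P$; (2) for $j\notin A$, $j$ lies in row $r$ of $T$ if and only if $\check d_j=(N+1-r)^\vee$; (3) for $i\in A$, $L+1-i$ lies in row $r$ of $Q$ if and only if $\check d_i=r^\vee$, where $A=\{i:\check d_i\in\{1^\vee,\dots,n^\vee\}\}$. (Since rows of tableaux are increasing, this determines $P,T,Q$ completely from $\check d\otimes c$.)
   Context: $\mathcal M_\diamond(L,\lambda)$: words $b=b_L\cdots b_1$ in letters $r,\bar r$ ($r\ge1$) and, only for $\diamond=\square$, $\emptyset$, such that with $\lambda^{(0)}=\emptyset$ and $\lambda^{(i)}$ obtained from $\lambda^{(i-1)}$ by adding a cell to row $r$ if $b_i=r$, removing one from row $r$ if $b_i=\bar r$, no change if $b_i=\emptyset$, all $\lambda^{(i)}$ are partitions and $\lambda^{(L)}=\lambda$. DDF data: start with $T_0,I_0$ empty; for $i=1..L$: if $b_i=r$ append $i$ to the end of row $r$; if $b_i=\bar r$ reverse-row-insert from the last cell of row $r$, ejecting $a$ from the first row, and add the 2-cycle $(a,i)$ to the involution; if $b_i=\emptyset$ add fixed point $i$. Let $T=T_L$ (shape $\lambda$) and $I=I_L$, an involution on the complement $A'$ of the entries of $T$ in $\{1,\dots,L\}$.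 Starting from $T$, for $a\in A'$ in decreasing order, row-insert $I(a)$ into the current tableau and write $L+1-a$ in the newly created cell of a recording tableau; the final tableau is $P$ and the recording tableau is $Q$ (skew shape $\mathrm{shape}(P)/\lambda$). VXR data: $B^1=\{1,\dots,N\}$, $B^{1\vee}=\{1^\vee,\dots,N^\vee\}$; write $i^*=N+1-i$. Set $\Psi(i)=(i^* )^\vee\otimes i$, $\Psi(\bar i)=i^\vee\otimes i^*$, $\Psi(\emptyset)=1^\vee\otimes1$ and $\Psi(b)=\Psi(b_L)\otimes\cdots\otimes\Psi(b_1)$, a word of length $2L$. Repeatedly replace an adjacent pair $x\otimes y^\vee$ (plain letter immediately left of a dual letter) by $R(x\otimes y^\vee)$, where $R(i\otimes j^\vee)=j^\vee\otimes i$ if $i\ne j$, $(i+1)^\vee\otimes(i+1)$ if $i=j<N$, $1^\vee\otimes1$ if $i=j=N$, until all dual letters precede all plain letters; the result (independent of the order of moves, being the combinatorial $R$-matrix of type $A^{(1)}_{N-1}$) is written $\check d\otimes c$ with $\check d=\check d_L\otimes\cdots\otimes\check d_1$ dual letters and $c=c_L\otimes\cdots\otimes c_1$ plain letters, positions counted from the right. *)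

theory Defs
  imports Main
begin

datatype diamond = Box | HDomino

datatype letter = Add nat | Rem nat | Emp

text \<open>A word b = b_L ... b_1 is stored as the list [b_1, ..., b_L], i.e. b_i = bs ! (i - 1).\<close>

text \<open>Shapes are functions from rows (numbered from 1) to row lengths; row 0 is always 0.\<close>

definition is_partition :: "(nat \<Rightarrow> nat) \<Rightarrow> bool" where
  "is_partition f \<longleftrightarrow> f 0 = 0 \<and> (\<forall>r\<ge>1. f (Suc r) \<le> f r) \<and> finite {r. f r \<noteq> 0}"

fun shape_step :: "(nat \<Rightarrow> nat) \<Rightarrow> letter \<Rightarrow> (nat \<Rightarrow> nat)" where
  "shape_step f (Add r) = f(r := f r + 1)"
| "shape_step f (Rem r) = f(r := f r - 1)"
| "shape_step f Emp = f"

definition shape :: "letter list \<Rightarrow> (nat \<Rightarrow> nat)" where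
  "shape bs = foldl shape_step (\<lambda>_. 0) bs"

fun letter_ok :: "diamond \<Rightarrow> letter \<Rightarrow> bool" where
  "letter_ok dm (Add r) = (r \<ge> 1)"
| "letter_ok dm (Rem r) = (r \<ge> 1)"
| "letter_ok dm Emp = (dm = Box)"

text \<open>Removal steps must remove an existing cell (row length may not go below 0).\<close>
fun removal_ok :: "(nat \<Rightarrow> nat) \<Rightarrow> letter \<Rightarrow> bool" where
  "removal_ok f (Rem r) = (f r > 0)"
| "removal_ok f _ = True"

definition Mset :: "diamond \<Rightarrow> nat \<Rightarrow> (nat \<Rightarrow> nat) \<Rightarrow> letter list set" where
  "Mset dm L lam = {bs. length bs = L \<and> (\<forall>x\<in>set bs. letter_ok dm x)
      \<and> (\<forall>k<L. removal_ok (shape (take k bs)) (bs ! k))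
      \<and> (\<forall>k\<le>L. is_partition (shape (take k bs)))
      \<and> shape bs = lam}"

section \<open>Tableaux as lists of rows (row r is entry r - 1)\<close>

type_synonym tableau = "nat list list"

definition row :: "tableau \<Rightarrow> nat \<Rightarrow> nat list" where
  "row T r = (if 1 \<le> r \<and> r \<le> length T then T ! (r - 1) else [])"

definition add_to_row :: "tableau \<Rightarrow> nat \<Rightarrow> nat \<Rightarrow> tableau" where
  "add_to_row T r x =
     (if r - 1 < length T then T[r - 1 := T ! (r - 1) @ [x]]
      else T @ replicate (r - 1 - length T) [] @ [[x]])"

text \<open>Row insertion (RSK bumping); returns the new tableau and the (1-based) row of the new cell.\<close>
fun row_ins :: "nat \<Rightarrow> tableau \<Rightarrow> tableau \<times> nat" where
  "row_ins x [] = ([[x]], 1)"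
| "row_ins x (rw # rws) =
     (if (\<forall>y\<in>set rw. y < x) then ((rw @ [x]) # rws, 1)
      else (let j = length (takeWhile (\<lambda>y. y < x) rw); z = rw ! j;
                (rws', k) = row_ins z rws
            in ((rw[j := x]) # rws', Suc k)))"

text \<open>Reverse bumping: the value x moves up into (0-based) rows k-1, ..., 0, replacing
  in each row the largest entry smaller than it; the entry leaving row 0 is ejected.\<close>
fun rev_bump :: "tableau \<Rightarrow> nat \<Rightarrow> nat \<Rightarrow> tableau \<times> nat" where
  "rev_bump T 0 x = (T, x)"
| "rev_bump T (Suc k) x =
     (let rw = T ! k; j = length (takeWhile (\<lambda>y. y < x) rw) - 1
      in rev_bump (T[k := rw[j := x]]) k (rw ! j))"

text \<open>Reverse row insertion from the last cell of (1-based) row r.\<close>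
definition rev_ins_from :: "tableau \<Rightarrow> nat \<Rightarrow> tableau \<times> nat" where
  "rev_ins_from T r =
     (let x = last (T ! (r - 1)); T' = T[r - 1 := butlast (T ! (r - 1))]
      in rev_bump T' (r - 1) x)"

fun ddf_step :: "tableau \<times> (nat \<Rightarrow> nat) \<Rightarrow> nat \<times> letter \<Rightarrow> tableau \<times> (nat \<Rightarrow> nat)" where
  "ddf_step (T, I) (i, Add r) = (add_to_row T r i, I)"
| "ddf_step (T, I) (i, Rem r) = (let (T', a) = rev_ins_from T r in (T', I(a := i, i := a)))"
| "ddf_step (T, I) (i, Emp) = (T, I(i := i))"

definition ddf_TI :: "letter list \<Rightarrow> tableau \<times> (nat \<Rightarrow> nat)" where
  "ddf_TI bs = foldl ddf_step ([], id) (zip [1..<Suc (length bs)] bs)"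

definition ddf_T :: "letter list \<Rightarrow> tableau" where
  "ddf_T bs = fst (ddf_TI bs)"

definition ddf_I :: "letter list \<Rightarrow> nat \<Rightarrow> nat" where
  "ddf_I bs = snd (ddf_TI bs)"

definition entries :: "tableau \<Rightarrow> nat set" where
  "entries T = (\<Union>rw\<in>set T. set rw)"

definition ddf_Aprime :: "letter list \<Rightarrow> nat set" where
  "ddf_Aprime bs = {1..length bs} - entries (ddf_T bs)"

text \<open>For a in A' in decreasing order, insert I(a) into P and record L+1-a in Q
  (Q stored by rows: row r of Q lists its entries, in the order the cells were created).\<close>
definition ddf_PQ :: "letter list \<Rightarrow> tableau \<times> tableau" where
  "ddf_PQ bs =
     foldl (\<lambda>(P, Q) a. let (P', k) = row_ins (ddf_I bs a) P
                       in (P', add_to_row Q k (length bs + 1 - a)))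
           (ddf_T bs, [])
           (rev (sorted_list_of_set (ddf_Aprime bs)))"

definition ddf_P :: "letter list \<Rightarrow> tableau" where
  "ddf_P bs = fst (ddf_PQ bs)"

definition ddf_Q :: "letter list \<Rightarrow> tableau" where
  "ddf_Q bs = snd (ddf_PQ bs)"

datatype crys = Pl nat | Du nat  \<comment> \<open>Pl i = i in B^1, Du j = j^vee in B^{1 vee}\<close>

fun Psi :: "nat \<Rightarrow> letter \<Rightarrow> crys list" where
  "Psi N (Add i) = [Du (N + 1 - i), Pl i]"
| "Psi N (Rem i) = [Du i, Pl (N + 1 - i)]"
| "Psi N Emp = [Du 1, Pl 1]"

text \<open>Psi(b) = Psi(b_L) (x) ... (x) Psi(b_1), leftmost tensor factor first in the list.\<close>
definition Psi_word :: "nat \<Rightarrow> letter list \<Rightarrow> crys list" where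
  "Psi_word N bs = concat (map (Psi N) (rev bs))"

definition Rmat :: "nat \<Rightarrow> nat \<Rightarrow> nat \<Rightarrow> crys list" where
  "Rmat N i j = (if i \<noteq> j then [Du j, Pl i]
                 else if i < N then [Du (i + 1), Pl (i + 1)]
                 else [Du 1, Pl 1])"

inductive rstep :: "nat \<Rightarrow> crys list \<Rightarrow> crys list \<Rightarrow> bool" for N where
  "rstep N (u @ [Pl i, Du j] @ v) (u @ Rmat N i j @ v)"

end

theory Submission
  imports Defs
begin


definition tnx :: "nat \<Rightarrow> nat \<Rightarrow> nat \<Rightarrow> nat" where
  "tnx N p j = (if p \<noteq> j then p else if p < N then p + 1 else 1)"
definition tout :: "nat \<Rightarrow> nat \<Rightarrow> nat \<Rightarrow> nat" where
  "tout N p j = (if p \<noteq> j then j else tnx N p j)"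

fun trav :: "nat \<Rightarrow> nat \<Rightarrow> nat list \<Rightarrow> nat list \<times> nat" where
  "trav N p [] = ([], p)"
| "trav N p (j # ds) = (let q = tnx N p j in (tout N p j # fst (trav N q ds), snd (trav N q ds)))"

lemma rstep_ctx: "rstep N x y \<Longrightarrow> rstep N (u @ x @ v) (u @ y @ v)"
proof (induction rule: rstep.induct)
  case (1 u' i j v')
  show ?case using rstep.intros[of N "u @ u'" i j "v' @ v"] by simp
qed

lemma rsteps_ctx: "(rstep N)\<^sup>*\<^sup>* x y \<Longrightarrow> (rstep N)\<^sup>*\<^sup>* (u @ x @ v) (u @ y @ v)"
  by (induction rule: rtranclp_induct) (auto intro: rtranclp.rtrancl_into_rtrancl rstep_ctx)

lemma trav_len: "length (fst (trav N p ds)) = length ds"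
  by (induction ds arbitrary: p) (auto simp: Let_def)

lemma trav_rsteps:
  "(rstep N)\<^sup>*\<^sup>* (Pl p # map Du ds) (map Du (fst (trav N p ds)) @ [Pl (snd (trav N p ds))])"
proof (induction ds arbitrary: p)
  case Nil
  then show ?case by simp
next
  case (Cons j ds)
  define q where "q = tnx N p j"
  define j' where "j' = tout N p j"
  have tr: "trav N p (j # ds) = (j' # fst (trav N q ds), snd (trav N q ds))"
    by (simp add: q_def j'_def Let_def)
  have "rstep N ([] @ [Pl p, Du j] @ map Du ds) ([] @ Rmat N p j @ map Du ds)"
    by (rule rstep.intros)
  moreover have "Rmat N p j = [Du j', Pl q]" by (auto simp: Rmat_def q_def j'_def tnx_def tout_def)
  ultimately have s1: "rstep N (Pl p # map Du (j # ds)) ([Du j'] @ (Pl q # map Du ds) @ [])" by simp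
  have s2: "(rstep N)\<^sup>*\<^sup>* ([Du j'] @ (Pl q # map Du ds) @ [])
     ([Du j'] @ (map Du (fst (trav N q ds)) @ [Pl (snd (trav N q ds))]) @ [])"
    by (rule rsteps_ctx[OF Cons.IH])
  show ?case unfolding tr using converse_rtranclp_into_rtranclp[OF s1 s2] by simp
qed

definition psiD :: "nat \<Rightarrow> letter \<Rightarrow> nat" where
  "psiD N b = (case b of Add i \<Rightarrow> N + 1 - i | Rem i \<Rightarrow> i | Emp \<Rightarrow> 1)"
definition psiP :: "nat \<Rightarrow> letter \<Rightarrow> nat" where
  "psiP N b = (case b of Add i \<Rightarrow> i | Rem i \<Rightarrow> N + 1 - i | Emp \<Rightarrow> 1)"

lemma Psi_eq: "Psi N b = [Du (psiD N b), Pl (psiP N b)]"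
  by (cases b) (auto simp: psiD_def psiP_def)

definition vxr_step :: "nat \<Rightarrow> nat list \<times> nat list \<Rightarrow> letter \<Rightarrow> nat list \<times> nat list" where
  "vxr_step N dc b = (psiD N b # fst (trav N (psiP N b) (fst dc)), snd (trav N (psiP N b) (fst dc)) # snd dc)"

definition vxr :: "nat \<Rightarrow> letter list \<Rightarrow> nat list \<times> nat list" where
  "vxr N bs = foldl (vxr_step N) ([], []) bs"

lemma vxr_snoc: "vxr N (bs @ [b]) = vxr_step N (vxr N bs) b"
  by (simp add: vxr_def)

lemma Psi_word_snoc: "Psi_word N (bs @ [b]) = Psi N b @ Psi_word N bs"
  by (simp add: Psi_word_def)

lemma vxr_rsteps: "(rstep N)\<^sup>*\<^sup>* (Psi_word N bs) (map Du (fst (vxr N bs)) @ map Pl (snd (vxr N bs)))"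
proof (induction bs rule: rev_induct)
  case Nil
  then show ?case by (simp add: Psi_word_def vxr_def)
next
  case (snoc b bs)
  obtain d c where dc: "vxr N bs = (d, c)" by fastforce
  have "(rstep N)\<^sup>*\<^sup>* ([Du (psiD N b), Pl (psiP N b)] @ Psi_word N bs)
      ([Du (psiD N b), Pl (psiP N b)] @ (map Du d @ map Pl c) @ [])"
    using rsteps_ctx[OF snoc.IH, of "[Du (psiD N b), Pl (psiP N b)]" "[]"] dc by simp
  moreover have "(rstep N)\<^sup>*\<^sup>* ([Du (psiD N b)] @ (Pl (psiP N b) # map Du d) @ map Pl c)
      ([Du (psiD N b)] @ (map Du (fst (trav N (psiP N b) d)) @ [Pl (snd (trav N (psiP N b) d))]) @ map Pl c)"
    by (rule rsteps_ctx[OF trav_rsteps])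
  ultimately show ?case
    by (simp add: Psi_word_snoc Psi_eq vxr_snoc dc vxr_step_def)
qed

definition nf :: "nat \<Rightarrow> crys list \<Rightarrow> bool" where
  "nf N w \<longleftrightarrow> \<not> (\<exists>w'. rstep N w w')"

definition Rm1 :: "nat \<Rightarrow> nat \<Rightarrow> nat \<Rightarrow> crys" where "Rm1 N i j = hd (Rmat N i j)"
definition Rm2 :: "nat \<Rightarrow> nat \<Rightarrow> nat \<Rightarrow> crys" where "Rm2 N i j = last (Rmat N i j)"
lemma Rmat_eq: "Rmat N i j = [Rm1 N i j, Rm2 N i j]"
  by (simp add: Rm1_def Rm2_def Rmat_def)

lemma rstep_iff: "rstep N a b \<longleftrightarrow> (\<exists>t i j. Suc t < length a \<and> a ! t = Pl i \<and> a ! Suc t = Du j \<and>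
     b = a[t := Rm1 N i j, Suc t := Rm2 N i j])"
proof
  assume "rstep N a b"
  then show "\<exists>t i j. Suc t < length a \<and> a ! t = Pl i \<and> a ! Suc t = Du j \<and>
     b = a[t := Rm1 N i j, Suc t := Rm2 N i j]"
  proof cases
    case (1 u i j v)
    show ?thesis
      apply (rule exI[of _ "length u"], rule exI[of _ i], rule exI[of _ j])
      using 1 by (simp add: Rmat_eq list_update_append nth_append)
  qed
next
  assume "\<exists>t i j. Suc t < length a \<and> a ! t = Pl i \<and> a ! Suc t = Du j \<and>
     b = a[t := Rm1 N i j, Suc t := Rm2 N i j]"
  then obtain t i j where h: "Suc t < length a" "a ! t = Pl i" "a ! Suc t = Du j"
    "b = a[t := Rm1 N i j, Suc t := Rm2 N i j]" by blast
  have a: "a = take t a @ [Pl i, Du j] @ drop (Suc (Suc t)) a"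
    using h by (metis Cons_nth_drop_Suc Suc_lessD append_Cons append_self_conv2 id_take_nth_drop)
  have b: "b = take t a @ Rmat N i j @ drop (Suc (Suc t)) a"
    using h by (simp add: Rmat_eq upd_conv_take_nth_drop nth_list_update list_update_append
        Cons_nth_drop_Suc min_def)
  show "rstep N a b" using a b rstep.intros by metis
qed

lemma rstep_diamond:
  assumes "rstep N a b" "rstep N a c"
  shows "b = c \<or> (\<exists>e. rstep N b e \<and> rstep N c e)"
proof -
  obtain t i j where h: "Suc t < length a" "a ! t = Pl i" "a ! Suc t = Du j"
    "b = a[t := Rm1 N i j, Suc t := Rm2 N i j]" using assms(1) rstep_iff by blast
  obtain t' i' j' where h': "Suc t' < length a" "a ! t' = Pl i'" "a ! Suc t' = Du j'"
    "c = a[t' := Rm1 N i' j', Suc t' := Rm2 N i' j']" using assms(2) rstep_iff by blast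
  show ?thesis
  proof (cases "t = t'")
    case True
    then show ?thesis using h h' by simp
  next
    case False
    have d1: "t' \<noteq> Suc t" using h h' by auto
    have d2: "t \<noteq> Suc t'" using h h' by auto
    define e where "e = a[t := Rm1 N i j, Suc t := Rm2 N i j, t' := Rm1 N i' j', Suc t' := Rm2 N i' j']"
    have "rstep N b e" unfolding rstep_iff e_def
      apply (rule exI[of _ t'], rule exI[of _ i'], rule exI[of _ j'])
      using h h' False d1 d2 by simp
    moreover have "rstep N c e" unfolding rstep_iff
      apply (rule exI[of _ t], rule exI[of _ i], rule exI[of _ j])
      using h h' False d1 d2 by (simp add: e_def list_update_swap)
    ultimately show ?thesis by blast
  qed
qed

lemma rsteps_nf_step:
  assumes "(rstep N)\<^sup>*\<^sup>* a b" "nf N b" "rstep N a c"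
  shows "(rstep N)\<^sup>*\<^sup>* c b"
  using assms
proof (induction arbitrary: c rule: converse_rtranclp_induct)
  case base
  then show ?case by (auto simp: nf_def)
next
  case (step a a')
  show ?case
  proof (cases "a' = c")
    case True
    then show ?thesis using step by simp
  next
    case False
    then obtain e where "rstep N a' e" "rstep N c e"
      using rstep_diamond[OF step.hyps(1) step.prems(2)] by blast
    then show ?thesis using step.IH[OF step.prems(1)] by (meson converse_rtranclp_into_rtranclp)
  qed
qed

lemma rsteps_nf_unique:
  assumes "(rstep N)\<^sup>*\<^sup>* a b1" "nf N b1" "(rstep N)\<^sup>*\<^sup>* a b2" "nf N b2"
  shows "b1 = b2"
  using assms
proof (induction arbitrary: b2 rule: converse_rtranclp_induct)
  case base
  then show ?case by (metis converse_rtranclpE nf_def)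
next
  case (step a a')
  have "(rstep N)\<^sup>*\<^sup>* a' b2" by (rule rsteps_nf_step[OF step.prems(2,3) step.hyps(1)])
  then show ?case using step.IH step.prems step.hyps by blast
qed

lemma nf_DuPl: "nf N (map Du d @ map Pl c)"
proof -
  { fix u i j v assume eq: "map Du d @ map Pl c = u @ [Pl i, Du j] @ v"
    let ?w = "map Du d @ map Pl c"
    have l: "Suc (length u) < length ?w" using arg_cong[OF eq, of length] by simp
    have a1: "?w ! length u = Pl i" using eq by simp
    have a2: "?w ! Suc (length u) = Du j" using eq by (simp add: nth_append)
    have False
    proof (cases "length u < length d")
      case True then show ?thesis using a1 by (simp add: nth_append)
    next
      case False then show ?thesis using a2 l by (simp add: nth_append)
    qed }
  note * = this
  show ?thesis unfolding nf_def
  proof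
    assume "\<exists>w'. rstep N (map Du d @ map Pl c) w'"
    then obtain w' where "rstep N (map Du d @ map Pl c) w'" by blast
    then show False
    proof cases
      case (1 u i j v)
      then show False using * by blast
    qed
  qed
qed

fun duv :: "crys list \<Rightarrow> nat list" where
  "duv [] = []" | "duv (Du j # w) = j # duv w" | "duv (Pl i # w) = duv w"
fun plv :: "crys list \<Rightarrow> nat list" where
  "plv [] = []" | "plv (Du j # w) = plv w" | "plv (Pl i # w) = i # plv w"
lemma duv_app: "duv (u @ w) = duv u @ duv w"
  by (induction u rule: duv.induct) auto
lemma plv_app: "plv (u @ w) = plv u @ plv w"
  by (induction u rule: plv.induct) auto
lemma duv_Du[simp]: "duv (map Du d) = d" by (induction d) auto
lemma duv_Pl[simp]: "duv (map Pl d) = []" by (induction d) auto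
lemma plv_Du[simp]: "plv (map Du d) = []" by (induction d) auto
lemma plv_Pl[simp]: "plv (map Pl d) = d" by (induction d) auto

lemma vxr_unique:
  assumes "(rstep N)\<^sup>*\<^sup>* (Psi_word N bs) (map Du d @ map Pl c)"
  shows "d = fst (vxr N bs) \<and> c = snd (vxr N bs)"
proof -
  have "map Du d @ map Pl c = map Du (fst (vxr N bs)) @ map Pl (snd (vxr N bs))"
    using rsteps_nf_unique[OF assms nf_DuPl vxr_rsteps nf_DuPl] .
  from arg_cong[OF this, of duv] arg_cong[OF this, of plv] show ?thesis
    by (simp add: duv_app plv_app)
qed


fun rowof :: "tableau \<Rightarrow> nat \<Rightarrow> nat" where
  "rowof [] j = 0"
| "rowof (rw # rws) j = (if j \<in> set rw then 1 else if rowof rws j = 0 then 0 else Suc (rowof rws j))"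

lemma entries_conv: "entries T = set (concat T)"
  by (simp add: entries_def)

lemma entries_Cons[simp]: "entries (rw # rws) = set rw \<union> entries rws"
  by (simp add: entries_def)
lemma entries_Nil[simp]: "entries [] = {}"
  by (simp add: entries_def)

lemma rowof_0_iff: "rowof T j = 0 \<longleftrightarrow> j \<notin> entries T"
  by (induction T) auto

lemma rowof_le: "rowof T j \<le> length T"
  by (induction T) auto

lemma rowof_Suc_iff:
  assumes "distinct (concat T)"
  shows "rowof T j = Suc i \<longleftrightarrow> i < length T \<and> j \<in> set (T ! i)"
  using assms
proof (induction T arbitrary: i)
  case Nil
  then show ?case by simp
next
  case (Cons rw rws)
  have d: "distinct (concat rws)" "set rw \<inter> set (concat rws) = {}" using Cons.prems by auto
  show ?case
  proof (cases i)
    case 0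
    then show ?thesis using rowof_0_iff[of rws j] by (auto simp: nth_Cons)
  next
    case (Suc i')
    have "j \<in> set (rws ! i') \<Longrightarrow> i' < length rws \<Longrightarrow> j \<notin> set rw"
    proof -
      assume a: "j \<in> set (rws ! i')" "i' < length rws"
      then have "j \<in> set (concat rws)" using nth_mem by fastforce
      then show "j \<notin> set rw" using d(2) by blast
    qed
    then show ?thesis using Cons.IH[OF d(1), of i'] Suc by auto
  qed
qed

lemma row_nth: "1 \<le> r \<Longrightarrow> r \<le> length T \<Longrightarrow> row T r = T ! (r - 1)"
  by (simp add: row_def)

lemma in_row_iff:
  assumes "distinct (concat T)" "1 \<le> r"
  shows "j \<in> set (row T r) \<longleftrightarrow> j \<in> entries T \<and> rowof T j = r"
proof -
  obtain i where i: "r = Suc i" using assms(2) by (cases r) auto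
  show ?thesis
    using rowof_Suc_iff[OF assms(1), of j i] i
    by (auto simp: row_def entries_conv set_concat)
qed

lemma rowof_pos: "j \<in> entries T \<Longrightarrow> rowof T j \<ge> 1"
  using rowof_0_iff[of T j] by simp

lemma rowof_in:
  assumes "distinct (concat T)" "j \<in> entries T"
  shows "j \<in> set (T ! (rowof T j - 1)) \<and> rowof T j - 1 < length T"
proof -
  obtain i where i: "rowof T j = Suc i" using rowof_pos[OF assms(2)] by (cases "rowof T j") auto
  have "i < length T \<and> j \<in> set (T ! i)" using rowof_Suc_iff[OF assms(1)] i by blast
  then show ?thesis using i by simp
qed

lemma tw_less: "\<not> (\<forall>y\<in>set xs. P y) \<Longrightarrow> length (takeWhile P xs) < length xs"
  by (induction xs) auto

lemma set_upd_decomp: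
  assumes "j < length xs"
  shows "set (xs[j := x]) = set (take j xs) \<union> {x} \<union> set (drop (Suc j) xs)"
    "set xs = set (take j xs) \<union> {xs ! j} \<union> set (drop (Suc j) xs)"
proof -
  show "set (xs[j := x]) = set (take j xs) \<union> {x} \<union> set (drop (Suc j) xs)"
    using assms by (simp add: upd_conv_take_nth_drop)
  have "set xs = set (take j xs @ xs ! j # drop (Suc j) xs)"
    using assms by (subst id_take_nth_drop[of j xs]) simp_all
  then show "set xs = set (take j xs) \<union> {xs ! j} \<union> set (drop (Suc j) xs)"
    by simp
qed

lemma entries_app[simp]: "entries (A @ B) = entries A \<union> entries B"
  by (simp add: entries_def)

lemma entries_upd_decomp:
  assumes "i < length T"
  shows "entries (T[i := v]) = entries (take i T) \<union> set v \<union> entries (drop (Suc i) T)"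
    "entries T = entries (take i T) \<union> set (T ! i) \<union> entries (drop (Suc i) T)"
proof -
  show "entries (T[i := v]) = entries (take i T) \<union> set v \<union> entries (drop (Suc i) T)"
    using assms by (simp add: upd_conv_take_nth_drop Un_assoc)
  have "entries T = entries (take i T @ T ! i # drop (Suc i) T)"
    using assms by (subst id_take_nth_drop[of i T]) simp_all
  then show "entries T = entries (take i T) \<union> set (T ! i) \<union> entries (drop (Suc i) T)"
    by (simp add: Un_assoc)
qed

lemma add_to_row_Nil1[simp]: "add_to_row [] (Suc 0) x = [[x]]"
  by (simp add: add_to_row_def)
lemma add_to_row_Cons1[simp]: "add_to_row (rw # rws) (Suc 0) x = (rw @ [x]) # rws"
  by (simp add: add_to_row_def)
lemma add_to_row_ConsSuc: "1 \<le> p \<Longrightarrow> add_to_row (rw # rws) (Suc p) x = rw # add_to_row rws p x"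
  by (cases p) (auto simp: add_to_row_def)

lemma add_to_row_length: "1 \<le> k \<Longrightarrow> length (add_to_row T k x) = max (length T) k"
  by (auto simp: add_to_row_def)

lemma add_to_row_nth:
  assumes "1 \<le> k" "i < length (add_to_row T k x)"
  shows "add_to_row T k x ! i = (if i = k - 1 then row T k @ [x] else if i < length T then T ! i else [])"
  using assms by (auto simp: add_to_row_def row_def nth_append nth_list_update)

lemma mem_row_add:
  assumes "1 \<le> k" "1 \<le> r"
  shows "v \<in> set (row (add_to_row Q k w) r) \<longleftrightarrow> v \<in> set (row Q r) \<or> (v = w \<and> r = k)"
proof -
  have l: "length (add_to_row Q k w) = max (length Q) k" by (rule add_to_row_length[OF assms(1)])
  show ?thesis
  proof (cases "r \<le> length (add_to_row Q k w)")
    case True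
    then have "row (add_to_row Q k w) r = add_to_row Q k w ! (r - 1)" using assms by (simp add: row_def)
    also have "\<dots> = (if r - 1 = k - 1 then row Q k @ [w] else if r - 1 < length Q then Q ! (r - 1) else [])"
      using add_to_row_nth[OF assms(1)] True assms(2) by simp
    finally show ?thesis using assms by (auto simp: row_def)
  next
    case False
    then show ?thesis using l assms by (auto simp: row_def)
  qed
qed

lemma entries_add: "1 \<le> k \<Longrightarrow> entries (add_to_row T k x) = insert x (entries T)"
proof -
  assume k: "1 \<le> k"
  show ?thesis
  proof (cases "k - 1 < length T")
    case True
    then have "add_to_row T k x = T[k - 1 := T ! (k - 1) @ [x]]" by (simp add: add_to_row_def)
    then show ?thesis using entries_upd_decomp[OF True] by auto
  next
    case False
    then show ?thesis by (auto simp: add_to_row_def entries_def)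
  qed
qed

lemma row_ins_props:
  "row_ins x S = (S', q) \<Longrightarrow> 1 \<le> q \<and> q \<le> length S' \<and> length S \<le> length S' \<and> length S' \<le> Suc (length S)
     \<and> entries S' = insert x (entries S)"
proof (induction x S arbitrary: S' q rule: row_ins.induct)
  case (1 x)
  then show ?case by auto
next
  case (2 x rw rws)
  show ?case
  proof (cases "\<forall>y\<in>set rw. y < x")
    case True
    then show ?thesis using 2(2) by auto
  next
    case False
    define j where "j = length (takeWhile (\<lambda>y. y < x) rw)"
    define z where "z = rw ! j"
    obtain rws' k where rk: "row_ins z rws = (rws', k)" by fastforce
    have jl: "j < length rw" using False unfolding j_def
      by (rule tw_less)
    have e: "S' = rw[j := x] # rws'" "q = Suc k" using 2(2) False rk by (auto simp: j_def z_def Let_def)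
    have IH: "1 \<le> k \<and> k \<le> length rws' \<and> length rws \<le> length rws' \<and> length rws' \<le> Suc (length rws) \<and>
        entries rws' = insert z (entries rws)"
      using 2(1)[OF False j_def z_def] rk by simp
    have "set (rw[j := x]) \<union> {z} = insert x (set rw)"
      using set_upd_decomp[OF jl] unfolding z_def by auto
    then show ?thesis using e IH by auto
  qed
qed

lemma row_ins_max: "(\<forall>y\<in>entries S. y < x) \<Longrightarrow> row_ins x S = (add_to_row S 1 x, 1)"
  by (cases S) (auto simp: add_to_row_Nil1 add_to_row_Cons1)

lemma row_ins_Cons_all: "\<forall>y\<in>set rw. y < x \<Longrightarrow> row_ins x (rw # rws) = ((rw @ [x]) # rws, 1)"
  by simp

lemma row_ins_Cons_bump:
  assumes "\<not> (\<forall>y\<in>set rw. y < x)" "j = length (takeWhile (\<lambda>y. y < x) rw)"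
  shows "row_ins x (rw # rws) = ((rw[j := x]) # fst (row_ins (rw ! j) rws), Suc (snd (row_ins (rw ! j) rws)))"
proof -
  obtain a b where ab: "row_ins (rw ! j) rws = (a, b)" by fastforce
  have "row_ins x (rw # rws) = (let j = length (takeWhile (\<lambda>y. y < x) rw); z = rw ! j;
                (rws', k) = row_ins z rws in ((rw[j := x]) # rws', Suc k))"
    by (simp only: row_ins.simps if_not_P[OF assms(1)])
  then show ?thesis using assms(2) ab by (simp add: Let_def)
qed

declare row_ins.simps(2)[simp del] row_ins_Cons_all[simp]

lemma row_ins_M:
  assumes "\<forall>y\<in>entries S. y < M" "x < M" "1 \<le> p" "p \<le> Suc (length S)" "row_ins x S = (S', q)"
  shows "row_ins x (add_to_row S p M) = (if q = p then (add_to_row S' (Suc p) M, Suc p) else (add_to_row S' p M, q))"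
  using assms
proof (induction x S arbitrary: p S' q rule: row_ins.induct)
  case (1 x)
  then have "p = 1" "S' = [[x]]" "q = 1" by auto
  moreover have "row_ins x [[M]] = ([[x], [M]], 2)"
    using row_ins_Cons_bump[of "[M]" x 0 "[]"] 1 by simp
  ultimately show ?case using 1 by (simp add: add_to_row_def)
next
  case (2 x rw rws)
  show ?case
  proof (cases "\<forall>y\<in>set rw. y < x")
    case True
    then have o: "S' = (rw @ [x]) # rws" "q = 1" using 2(6) by auto
    show ?thesis
    proof (cases "p = 1")
      case True
      have tw: "length (takeWhile (\<lambda>y. y < x) (rw @ [M])) = length rw" using \<open>\<forall>y\<in>set rw. y < x\<close> 2(3) by simp
      have nall: "\<not> (\<forall>y\<in>set (rw @ [M]). y < x)" using 2(3) by simp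
      have rm: "row_ins M rws = (add_to_row rws 1 M, 1)"
        by (rule row_ins_max) (use 2(2) in auto)
      have "row_ins x ((rw @ [M]) # rws) = (((rw @ [M])[length rw := x]) # fst (row_ins ((rw @ [M]) ! length rw) rws),
          Suc (snd (row_ins ((rw @ [M]) ! length rw) rws)))"
        by (rule row_ins_Cons_bump[OF nall tw[symmetric]])
      also have "\<dots> = ((rw @ [x]) # add_to_row rws 1 M, 2)" using rm by simp
      finally have "row_ins x (add_to_row (rw # rws) p M) = ((rw @ [x]) # add_to_row rws 1 M, 2)"
        using True by simp
      then show ?thesis using o True add_to_row_ConsSuc[of 1 "rw @ [x]" rws M] by simp
    next
      case False
      then obtain p' where p': "p = Suc p'" "1 \<le> p'" using 2(4) by (cases p) auto
      have "row_ins x (add_to_row (rw # rws) p M) = ((rw @ [x]) # add_to_row rws p' M, 1)"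
        using p' \<open>\<forall>y\<in>set rw. y < x\<close> by (simp add: add_to_row_ConsSuc)
      then show ?thesis using o p' add_to_row_ConsSuc[of p' "rw @ [x]" rws M] by simp
    qed
  next
    case False
    define j where "j = length (takeWhile (\<lambda>y. y < x) rw)"
    define z where "z = rw ! j"
    obtain rws' k where rk: "row_ins z rws = (rws', k)" by fastforce
    have jl: "j < length rw" using False unfolding j_def by (rule tw_less)
    have ri: "row_ins x (rw # rws) = (rw[j := x] # rws', Suc k)"
      using row_ins_Cons_bump[OF False j_def] rk by (simp add: z_def)
    have o: "S' = rw[j := x] # rws'" "q = Suc k" using 2(6) ri by auto
    have zM: "z < M" using 2(2) jl by (auto simp: z_def)
    have nall: "\<not> (\<forall>y\<in>set (rw @ [M]). y < x)" using False by auto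
    have tw: "j = length (takeWhile (\<lambda>y. y < x) (rw @ [M]))"
      using False takeWhile_append1 j_def by metis
    have e1: "(rw @ [M]) ! j = z" using jl by (simp add: z_def nth_append)
    have e2: "(rw @ [M])[j := x] = rw[j := x] @ [M]" using jl by (simp add: list_update_append)
    show ?thesis
    proof (cases "p = 1")
      case True
      have "row_ins x ((rw @ [M]) # rws) = (((rw @ [M])[j := x]) # fst (row_ins ((rw @ [M]) ! j) rws),
          Suc (snd (row_ins ((rw @ [M]) ! j) rws)))"
        by (rule row_ins_Cons_bump[OF nall tw])
      also have "\<dots> = ((rw[j := x] @ [M]) # rws', Suc k)" using e1 e2 rk by simp
      finally have "row_ins x ((rw @ [M]) # rws) = ((rw[j := x] @ [M]) # rws', Suc k)" .
      moreover have "1 \<le> k" using row_ins_props[OF rk] by simp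
      ultimately show ?thesis using o True by simp
    next
      case pn: False
      then obtain p' where p': "p = Suc p'" "1 \<le> p'" using 2(4) by (cases p) auto
      have IH: "row_ins z (add_to_row rws p' M) = (if k = p' then (add_to_row rws' (Suc p') M, Suc p') else (add_to_row rws' p' M, k))"
        using 2(1)[OF False j_def z_def, of p' rws' k] 2(2) zM p' 2(5) rk by auto
      have "row_ins x (rw # add_to_row rws p' M) = (rw[j := x] # fst (row_ins z (add_to_row rws p' M)),
          Suc (snd (row_ins z (add_to_row rws p' M))))"
        using row_ins_Cons_bump[OF False j_def] by (simp add: z_def)
      then show ?thesis using IH o p' add_to_row_ConsSuc[of p' "rw[j := x]" rws' M]
        add_to_row_ConsSuc[of "Suc p'" "rw[j := x]" rws' M]
        by (auto simp: add_to_row_ConsSuc)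
    qed
  qed
qed


fun irun :: "(nat \<Rightarrow> nat) \<Rightarrow> (nat \<Rightarrow> bool) \<Rightarrow> (nat \<Rightarrow> nat) \<Rightarrow> tableau \<Rightarrow> nat list \<Rightarrow> tableau \<times> nat list" where
  "irun E Ap I S [] = (S, [])"
| "irun E Ap I S (j # js) = (if Ap j
     then (fst (irun E Ap I (fst (row_ins (I j) S)) js), snd (row_ins (I j) S) # snd (irun E Ap I (fst (row_ins (I j) S)) js))
     else (fst (irun E Ap I S js), E j # snd (irun E Ap I S js)))"

lemma irun_append: "irun E Ap I S (xs @ ys) =
   (fst (irun E Ap I (fst (irun E Ap I S xs)) ys), snd (irun E Ap I S xs) @ snd (irun E Ap I (fst (irun E Ap I S xs)) ys))"
  by (induction xs arbitrary: S) auto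

lemma irun_cong: "(\<forall>j\<in>set js. Ap j = Ap' j \<and> (Ap j \<longrightarrow> I j = I' j) \<and> (\<not> Ap j \<longrightarrow> E j = E' j)) \<Longrightarrow>
   irun E Ap I S js = irun E' Ap' I' S js"
  by (induction js arbitrary: S) auto

lemma irun_len: "length (snd (irun E Ap I S js)) = length js"
  by (induction js arbitrary: S) auto

lemma irun_props: "length S \<le> length (fst (irun E Ap I S js)) \<and> length (fst (irun E Ap I S js)) \<le> length S + length js
   \<and> entries (fst (irun E Ap I S js)) = entries S \<union> I ` {j \<in> set js. Ap j}"
proof (induction js arbitrary: S)
  case Nil
  then show ?case by simp
next
  case (Cons j js)
  obtain S1 q where r: "row_ins (I j) S = (S1, q)" by fastforce
  note rp = row_ins_props[OF r]
  show ?case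
  proof (cases "Ap j")
    case True
    then show ?thesis using Cons.IH[of S1] rp r by auto
  next
    case False
    then show ?thesis using Cons.IH[of S] by auto
  qed
qed

lemma irun_Q: "distinct js \<Longrightarrow> \<exists>Q. (\<forall>E. snd (irun E Ap I S js) = map (\<lambda>j. if Ap j then Q j else E j) js)
   \<and> (\<forall>j\<in>set js. Ap j \<longrightarrow> 1 \<le> Q j \<and> Q j \<le> length S + length js)"
proof (induction js arbitrary: S)
  case Nil
  then show ?case by simp
next
  case (Cons j js)
  obtain S1 q where r: "row_ins (I j) S = (S1, q)" by fastforce
  note rp = row_ins_props[OF r]
  show ?case
  proof (cases "Ap j")
    case True
    obtain Q where Q: "\<forall>E. snd (irun E Ap I S1 js) = map (\<lambda>j. if Ap j then Q j else E j) js"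
      "\<forall>j\<in>set js. Ap j \<longrightarrow> 1 \<le> Q j \<and> Q j \<le> length S1 + length js"
      using Cons.IH[of S1] Cons.prems by auto
    have m: "map (\<lambda>i. if Ap i then (Q(j := q)) i else E i) js = map (\<lambda>i. if Ap i then Q i else E i) js" for E
      using Cons.prems by (auto intro: map_cong)
    show ?thesis
      apply (rule exI[of _ "Q(j := q)"])
      using True Q m r rp by auto
  next
    case False
    obtain Q where Q: "\<forall>E. snd (irun E Ap I S js) = map (\<lambda>j. if Ap j then Q j else E j) js"
      "\<forall>j\<in>set js. Ap j \<longrightarrow> 1 \<le> Q j \<and> Q j \<le> length S + length js"
      using Cons.IH[of S] Cons.prems by auto
    show ?thesis
      apply (rule exI[of _ Q])
      using False Q by auto
  qed
qed

lemma irun_trav_M: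
  assumes "\<forall>y\<in>entries S. y < M" "\<forall>j\<in>set js. Ap j \<longrightarrow> I j < M" "1 \<le> p" "p \<le> Suc (length S)"
    "\<forall>j\<in>set js. \<not> Ap j \<longrightarrow> B \<le> E j" "p + length js < B" "p + length js < N"
  shows "fst (trav N p (snd (irun E Ap I S js))) = snd (irun E Ap I (add_to_row S p M) js)
    \<and> fst (irun E Ap I (add_to_row S p M) js) = add_to_row (fst (irun E Ap I S js)) (snd (trav N p (snd (irun E Ap I S js)))) M
    \<and> p \<le> snd (trav N p (snd (irun E Ap I S js))) \<and> snd (trav N p (snd (irun E Ap I S js))) \<le> p + length js"
  using assms
proof (induction js arbitrary: S p)
  case Nil
  then show ?case by simp
next
  case (Cons j js)
  obtain S1 q where r: "row_ins (I j) S = (S1, q)" by fastforce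
  note rp = row_ins_props[OF r]
  show ?case
  proof (cases "Ap j")
    case True
    have IjM: "I j < M" using Cons.prems True by simp
    have RM: "row_ins (I j) (add_to_row S p M) = (if q = p then (add_to_row S1 (Suc p) M, Suc p) else (add_to_row S1 p M, q))"
      by (rule row_ins_M[OF Cons.prems(1) IjM Cons.prems(3,4) r])
    have S1M: "\<forall>y\<in>entries S1. y < M" using rp Cons.prems(1) IjM by auto
    show ?thesis
    proof (cases "q = p")
      case True
      have pN: "p < N" using Cons.prems(7) by simp
      have tr: "trav N p (q # snd (irun E Ap I S1 js)) = (Suc p # fst (trav N (Suc p) (snd (irun E Ap I S1 js))),
          snd (trav N (Suc p) (snd (irun E Ap I S1 js))))"
        using True pN by (simp add: tnx_def tout_def)
      have IH: "fst (trav N (Suc p) (snd (irun E Ap I S1 js))) = snd (irun E Ap I (add_to_row S1 (Suc p) M) js)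
        \<and> fst (irun E Ap I (add_to_row S1 (Suc p) M) js) = add_to_row (fst (irun E Ap I S1 js)) (snd (trav N (Suc p) (snd (irun E Ap I S1 js)))) M
        \<and> Suc p \<le> snd (trav N (Suc p) (snd (irun E Ap I S1 js))) \<and> snd (trav N (Suc p) (snd (irun E Ap I S1 js))) \<le> Suc p + length js"
        apply (rule Cons.IH[OF S1M])
        using Cons.prems True rp by auto
      show ?thesis using tr IH RM True \<open>Ap j\<close> r by simp
    next
      case False
      have tr: "trav N p (q # snd (irun E Ap I S1 js)) = (q # fst (trav N p (snd (irun E Ap I S1 js))),
          snd (trav N p (snd (irun E Ap I S1 js))))"
        using False by (simp add: tnx_def tout_def)
      have IH: "fst (trav N p (snd (irun E Ap I S1 js))) = snd (irun E Ap I (add_to_row S1 p M) js)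
        \<and> fst (irun E Ap I (add_to_row S1 p M) js) = add_to_row (fst (irun E Ap I S1 js)) (snd (trav N p (snd (irun E Ap I S1 js)))) M
        \<and> p \<le> snd (trav N p (snd (irun E Ap I S1 js))) \<and> snd (trav N p (snd (irun E Ap I S1 js))) \<le> p + length js"
        apply (rule Cons.IH[OF S1M])
        using Cons.prems rp by auto
      show ?thesis using tr IH RM False \<open>Ap j\<close> r by simp
    qed
  next
    case False
    have "p < E j" using Cons.prems(5,6) False by fastforce
    then have tr: "trav N p (E j # snd (irun E Ap I S js)) = (E j # fst (trav N p (snd (irun E Ap I S js))),
          snd (trav N p (snd (irun E Ap I S js))))"
      by (simp add: tnx_def tout_def)
    have IH: "fst (trav N p (snd (irun E Ap I S js))) = snd (irun E Ap I (add_to_row S p M) js)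
        \<and> fst (irun E Ap I (add_to_row S p M) js) = add_to_row (fst (irun E Ap I S js)) (snd (trav N p (snd (irun E Ap I S js)))) M
        \<and> p \<le> snd (trav N p (snd (irun E Ap I S js))) \<and> snd (trav N p (snd (irun E Ap I S js))) \<le> p + length js"
      apply (rule Cons.IH[OF Cons.prems(1)])
      using Cons.prems by auto
    show ?thesis using tr IH False by simp
  qed
qed

lemma foldl_PQ:
  "fst (foldl (\<lambda>(P, Q) a. let (P', k) = row_ins (I a) P in (P', add_to_row Q k (Lp - a))) (S, Q0) (filter Ap js))
     = fst (irun E Ap I S js) \<and>
   (\<forall>v r. 1 \<le> r \<longrightarrow> (v \<in> set (row (snd (foldl (\<lambda>(P, Q) a. let (P', k) = row_ins (I a) P in (P', add_to_row Q k (Lp - a))) (S, Q0) (filter Ap js))) r)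
      \<longleftrightarrow> v \<in> set (row Q0 r) \<or> (\<exists>t<length js. Ap (js ! t) \<and> v = Lp - js ! t \<and> r = snd (irun E Ap I S js) ! t)))"
proof (induction js arbitrary: S Q0)
  case Nil
  then show ?case by simp
next
  case (Cons j js)
  obtain S1 q where r: "row_ins (I j) S = (S1, q)" by fastforce
  note rp = row_ins_props[OF r]
  show ?case
  proof (cases "Ap j")
    case True
    have f: "filter Ap (j # js) = j # filter Ap js" using True by simp
    have st: "(\<lambda>(P, Q) a. let (P', k) = row_ins (I a) P in (P', add_to_row Q k (Lp - a))) (S, Q0) j
        = (S1, add_to_row Q0 q (Lp - j))" using r by simp
    note IH = Cons.IH[of S1 "add_to_row Q0 q (Lp - j)"]
    show ?thesis
      unfolding f foldl_Cons st
    proof (intro conjI allI impI)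
      show "fst (foldl (\<lambda>(P, Q) a. let (P', k) = row_ins (I a) P in (P', add_to_row Q k (Lp - a))) (S1, add_to_row Q0 q (Lp - j)) (filter Ap js)) =
          fst (irun E Ap I S (j # js))" using IH True r by simp
    next
      fix v r' assume r': "1 \<le> (r'::nat)"
      have ex: "(\<exists>t<length (j # js). Ap ((j # js) ! t) \<and> v = Lp - (j # js) ! t \<and> r' = snd (irun E Ap I S (j # js)) ! t)
          \<longleftrightarrow> (Ap j \<and> v = Lp - j \<and> r' = q) \<or> (\<exists>t<length js. Ap (js ! t) \<and> v = Lp - js ! t \<and> r' = snd (irun E Ap I S1 js) ! t)"
        (is "?L \<longleftrightarrow> ?R")
      proof
        assume ?L
        then obtain t where t: "t < length (j # js)" "Ap ((j # js) ! t)" "v = Lp - (j # js) ! t" "r' = snd (irun E Ap I S (j # js)) ! t" by blast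
        show ?R
        proof (cases t)
          case 0 then show ?thesis using t True r by simp
        next
          case (Suc t') then show ?thesis using t True r by auto
        qed
      next
        assume ?R
        then show ?L
        proof
          assume "Ap j \<and> v = Lp - j \<and> r' = q"
          then show ?L using r True by (intro exI[of _ 0]) simp
        next
          assume "\<exists>t<length js. Ap (js ! t) \<and> v = Lp - js ! t \<and> r' = snd (irun E Ap I S1 js) ! t"
          then obtain t where "t<length js" "Ap (js ! t)" "v = Lp - js ! t" "r' = snd (irun E Ap I S1 js) ! t" by blast
          then show ?L using r True by (intro exI[of _ "Suc t"]) simp
        qed
      qed
      show "v \<in> set (row (snd (foldl (\<lambda>(P, Q) a. let (P', k) = row_ins (I a) P in (P', add_to_row Q k (Lp - a))) (S1, add_to_row Q0 q (Lp - j)) (filter Ap js))) r') =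
         (v \<in> set (row Q0 r') \<or> (\<exists>t<length (j # js). Ap ((j # js) ! t) \<and> v = Lp - (j # js) ! t \<and> r' = snd (irun E Ap I S (j # js)) ! t))"
        using IH r' mem_row_add[of q r' v Q0 "Lp - j"] rp ex True by auto
    qed
  next
    case False
    have f: "filter Ap (j # js) = filter Ap js" using False by simp
    note IH = Cons.IH[of S Q0]
    show ?thesis
      unfolding f
    proof (intro conjI allI impI)
      show "fst (foldl (\<lambda>(P, Q) a. let (P', k) = row_ins (I a) P in (P', add_to_row Q k (Lp - a))) (S, Q0) (filter Ap js)) =
          fst (irun E Ap I S (j # js))" using IH False by simp
    next
      fix v r' assume r': "1 \<le> (r'::nat)"
      have ex: "(\<exists>t<length (j # js). Ap ((j # js) ! t) \<and> v = Lp - (j # js) ! t \<and> r' = snd (irun E Ap I S (j # js)) ! t)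
          \<longleftrightarrow> (\<exists>t<length js. Ap (js ! t) \<and> v = Lp - js ! t \<and> r' = snd (irun E Ap I S js) ! t)"
        (is "?L \<longleftrightarrow> ?R")
      proof
        assume ?L
        then obtain t where t: "t < length (j # js)" "Ap ((j # js) ! t)" "v = Lp - (j # js) ! t" "r' = snd (irun E Ap I S (j # js)) ! t" by blast
        show ?R
        proof (cases t)
          case 0 then show ?thesis using t False by simp
        next
          case (Suc t') then show ?thesis using t False by auto
        qed
      next
        assume ?R
        then obtain t where "t<length js" "Ap (js ! t)" "v = Lp - js ! t" "r' = snd (irun E Ap I S js) ! t" by blast
        then show ?L using False by (intro exI[of _ "Suc t"]) simp
      qed
      show "v \<in> set (row (snd (foldl (\<lambda>(P, Q) a. let (P', k) = row_ins (I a) P in (P', add_to_row Q k (Lp - a))) (S, Q0) (filter Ap js))) r') =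
         (v \<in> set (row Q0 r') \<or> (\<exists>t<length (j # js). Ap ((j # js) ! t) \<and> v = Lp - (j # js) ! t \<and> r' = snd (irun E Ap I S (j # js)) ! t))"
        using IH r' ex by auto
    qed
  qed
qed

lemma sorted_Aprime: "rev (sorted_list_of_set ({1..L} - X)) = filter (\<lambda>j. j \<notin> X) (rev [1..<Suc L])"
proof -
  have s: "sorted (filter (\<lambda>j. j \<notin> X) [1..<Suc L])"
    by (rule sorted_wrt_filter[OF sorted_upt])
  have "sorted_list_of_set ({1..L} - X) = filter (\<lambda>j. j \<notin> X) [1..<Suc L]"
    by (rule sorted_distinct_set_unique) (use s in auto)
  then show ?thesis by (simp add: rev_filter)
qed


definition tab :: "tableau \<Rightarrow> bool" where
  "tab T \<longleftrightarrow> (\<forall>rw\<in>set T. sorted_wrt (<) rw) \<and> distinct (concat T) \<and>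
     (\<forall>s. Suc s < length T \<longrightarrow> length (T ! Suc s) \<le> length (T ! s) \<and> (\<forall>c<length (T ! Suc s). T ! s ! c < T ! Suc s ! c))"

definition Qc :: "tableau \<Rightarrow> nat \<Rightarrow> nat \<Rightarrow> bool" where
  "Qc T s x \<longleftrightarrow> (\<exists>c. c < length (T ! (s - 1)) \<and> T ! (s - 1) ! c < x \<and> (s < length T \<and> c < length (T ! s) \<longrightarrow> x < T ! s ! c))"

lemma tw_facts:
  fixes rw :: "nat list"
  assumes "sorted_wrt (<) rw" "x \<notin> set rw" "c < length rw" "rw ! c < x"
  shows "c < length (takeWhile (\<lambda>y. y < x) rw)" "length (takeWhile (\<lambda>y. y < x) rw) \<le> length rw"
    "\<forall>i<length (takeWhile (\<lambda>y. y < x) rw). rw ! i < x"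
    "\<forall>i. length (takeWhile (\<lambda>y. y < x) rw) \<le> i \<longrightarrow> i < length rw \<longrightarrow> x < rw ! i"
proof -
  define t where "t = length (takeWhile (\<lambda>y. y < x) rw)"
  show "t \<le> length rw" unfolding t_def by (rule length_takeWhile_le)
  show a: "\<forall>i<t. rw ! i < x"
  proof (intro allI impI)
    fix i assume i: "i < t"
    then have e: "takeWhile (\<lambda>y. y < x) rw ! i = rw ! i" unfolding t_def by (rule takeWhile_nth)
    have "takeWhile (\<lambda>y. y < x) rw ! i \<in> set (takeWhile (\<lambda>y. y < x) rw)" using i unfolding t_def by (rule nth_mem)
    then have "rw ! i \<in> set (takeWhile (\<lambda>y. y < x) rw)" using e by simp
    then show "rw ! i < x" by (rule set_takeWhileD[THEN conjunct2])
  qed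
  show b: "\<forall>i. t \<le> i \<longrightarrow> i < length rw \<longrightarrow> x < rw ! i"
  proof (intro allI impI)
    fix i assume i: "t \<le> i" "i < length rw"
    then have tl: "t < length rw" by simp
    have n1: "\<not> rw ! t < x" unfolding t_def by (rule nth_length_takeWhile[OF tl[unfolded t_def]])
    have n2: "rw ! t \<noteq> x" using assms(2) nth_mem[OF tl] by auto
    have xt: "x < rw ! t" using n1 n2 by simp
    show "x < rw ! i"
    proof (cases "i = t")
      case True then show ?thesis using xt by simp
    next
      case False
      then have "t < i" using i by simp
      then have "rw ! t < rw ! i" using sorted_wrt_nth_less[OF assms(1)] i(2) by blast
      then show ?thesis using xt by simp
    qed
  qed
  show "c < t"
  proof (rule ccontr)
    assume "\<not> c < t" then have "x < rw ! c" using b assms(3) by simp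
    then show False using assms(4) by simp
  qed
qed

lemma dist_upd:
  assumes "distinct (concat T)" "i < length T" "distinct v" "set v \<inter> (entries T - set (T ! i)) = {}"
  shows "distinct (concat (T[i := v]))"
proof -
  have T: "T = take i T @ T ! i # drop (Suc i) T" using assms(2) by (rule id_take_nth_drop)
  have d: "distinct (concat (take i T) @ T ! i @ concat (drop (Suc i) T))"
    using assms(1) T by (metis concat.simps(2) concat_append)
  have e: "entries T = entries (take i T) \<union> set (T ! i) \<union> entries (drop (Suc i) T)"
    by (rule entries_upd_decomp(2)[OF assms(2)])
  have "concat (T[i := v]) = concat (take i T) @ v @ concat (drop (Suc i) T)"
    using assms(2) by (simp add: upd_conv_take_nth_drop)
  moreover have "distinct (concat (take i T) @ v @ concat (drop (Suc i) T))"
  proof -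
    let ?A = "entries (take i T)" and ?B = "set (T ! i)" and ?C = "entries (drop (Suc i) T)"
    have d3: "distinct (concat (take i T))" "distinct (concat (drop (Suc i) T))"
      "?A \<inter> ?B = {}" "?A \<inter> ?C = {}" "?B \<inter> ?C = {}"
      using d by (auto simp: entries_conv)
    have "set v \<inter> ?A = {}" "set v \<inter> ?C = {}" using assms(4) e d3 by auto
    then show ?thesis using d3 assms(3) by (auto simp: entries_conv)
  qed
  ultimately show ?thesis by simp
qed

lemma sorted_upd:
  fixes rw :: "nat list"
  assumes "sorted_wrt (<) rw" "j < length rw" "\<forall>i<j. rw ! i < x" "\<forall>i. j < i \<longrightarrow> i < length rw \<longrightarrow> x < rw ! i"
  shows "sorted_wrt (<) (rw[j := x])"
  unfolding sorted_wrt_iff_nth_less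
proof (intro allI impI)
  fix a b assume ab: "a < b" "b < length (rw[j := x])"
  show "rw[j := x] ! a < rw[j := x] ! b"
    using ab assms sorted_wrt_nth_less[OF assms(1), of a b] by (auto simp: nth_list_update)
qed

definition rb_j :: "tableau \<Rightarrow> nat \<Rightarrow> nat \<Rightarrow> nat" where
  "rb_j T s x = length (takeWhile (\<lambda>y. y < x) (T ! (s - 1))) - 1"
definition rb_y :: "tableau \<Rightarrow> nat \<Rightarrow> nat \<Rightarrow> nat" where
  "rb_y T s x = T ! (s - 1) ! rb_j T s x"
definition rb_T :: "tableau \<Rightarrow> nat \<Rightarrow> nat \<Rightarrow> tableau" where
  "rb_T T s x = T[s - 1 := (T ! (s - 1))[rb_j T s x := x]]"

lemma rev_bump_Suc: "rev_bump T (Suc s) x = rev_bump (rb_T T (Suc s) x) s (rb_y T (Suc s) x)"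
  by (simp add: rb_T_def rb_y_def rb_j_def Let_def)

context
  fixes T :: tableau and s x :: nat
  assumes tT: "tab T" and xT: "x \<notin> entries T" and s1: "1 \<le> s" and sl: "s \<le> length T" and q: "Qc T s x"
begin

private lemma rw_in: "T ! (s - 1) \<in> set T"
proof -
  have "s - 1 < length T" using s1 sl by simp
  then show ?thesis by simp
qed

private lemma rw_sorted: "sorted_wrt (<) (T ! (s - 1))"
  using tT rw_in unfolding tab_def by blast

private lemma x_notin_rw: "x \<notin> set (T ! (s - 1))"
  using xT rw_in unfolding entries_def by blast

private lemma tfacts:
  obtains c where "c < length (T ! (s - 1))" "T ! (s - 1) ! c < x"
    "s < length T \<and> c < length (T ! s) \<longrightarrow> x < T ! s ! c"
    "c < length (takeWhile (\<lambda>y. y < x) (T ! (s - 1)))"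
    "length (takeWhile (\<lambda>y. y < x) (T ! (s - 1))) \<le> length (T ! (s - 1))"
    "\<forall>i<length (takeWhile (\<lambda>y. y < x) (T ! (s - 1))). T ! (s - 1) ! i < x"
    "\<forall>i. length (takeWhile (\<lambda>y. y < x) (T ! (s - 1))) \<le> i \<longrightarrow> i < length (T ! (s - 1)) \<longrightarrow> x < T ! (s - 1) ! i"
proof -
  obtain c where c: "c < length (T ! (s - 1))" "T ! (s - 1) ! c < x"
    "s < length T \<and> c < length (T ! s) \<longrightarrow> x < T ! s ! c" using q unfolding Qc_def by blast
  show ?thesis using that[OF c tw_facts[OF rw_sorted x_notin_rw c(1,2)]] .
qed

lemma rb_j_lt: "rb_j T s x < length (T ! (s - 1))"
proof -
  obtain c where "c < length (takeWhile (\<lambda>y. y < x) (T ! (s - 1)))"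
    "length (takeWhile (\<lambda>y. y < x) (T ! (s - 1))) \<le> length (T ! (s - 1))" using tfacts by blast
  then show ?thesis unfolding rb_j_def by linarith
qed

lemma rb_j_t: "rb_j T s x < length (takeWhile (\<lambda>y. y < x) (T ! (s - 1)))"
proof -
  obtain c where "c < length (takeWhile (\<lambda>y. y < x) (T ! (s - 1)))" using tfacts by blast
  then show ?thesis unfolding rb_j_def by linarith
qed

lemma rb_y_lt: "rb_y T s x < x"
proof -
  have "\<forall>i<length (takeWhile (\<lambda>y. y < x) (T ! (s - 1))). T ! (s - 1) ! i < x" using tfacts by blast
  then show ?thesis using rb_j_t unfolding rb_y_def by blast
qed

lemma rb_y_in: "rb_y T s x \<in> set (T ! (s - 1))"
  using rb_j_lt unfolding rb_y_def by simp

lemma rb_before: "\<forall>i<rb_j T s x. T ! (s - 1) ! i < rb_y T s x"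
  using sorted_wrt_nth_less[OF rw_sorted] rb_j_lt unfolding rb_y_def by auto

lemma rb_after: "\<forall>i. rb_j T s x < i \<longrightarrow> i < length (T ! (s - 1)) \<longrightarrow> x < T ! (s - 1) ! i"
proof -
  obtain c where "c < length (takeWhile (\<lambda>y. y < x) (T ! (s - 1)))"
    "\<forall>i. length (takeWhile (\<lambda>y. y < x) (T ! (s - 1))) \<le> i \<longrightarrow> i < length (T ! (s - 1)) \<longrightarrow> x < T ! (s - 1) ! i"
    using tfacts by metis
  moreover have "rb_j T s x + 1 = length (takeWhile (\<lambda>y. y < x) (T ! (s - 1)))"
    using rb_j_t unfolding rb_j_def by linarith
  ultimately show ?thesis by auto
qed

lemma rb_max: "\<forall>z\<in>set (T ! (s - 1)). z < x \<longrightarrow> z \<le> rb_y T s x"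
proof (intro ballI impI)
  fix z assume z: "z \<in> set (T ! (s - 1))" "z < x"
  then obtain i where i: "i < length (T ! (s - 1))" "T ! (s - 1) ! i = z" by (auto simp: in_set_conv_nth)
  have "\<not> rb_j T s x < i" using rb_after i z by auto
  then have "i \<le> rb_j T s x" by simp
  then show "z \<le> rb_y T s x" using sorted_wrt_nth_less[OF rw_sorted, of i "rb_j T s x"] i rb_j_lt
    unfolding rb_y_def by (cases "i = rb_j T s x") auto
qed

lemma rb_col: "s < length T \<Longrightarrow> rb_j T s x < length (T ! s) \<Longrightarrow> x < T ! s ! rb_j T s x"
proof -
  assume a: "s < length T" "rb_j T s x < length (T ! s)"
  obtain c where c: "s < length T \<and> c < length (T ! s) \<longrightarrow> x < T ! s ! c"
    "c < length (takeWhile (\<lambda>y. y < x) (T ! (s - 1)))" using tfacts by metis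
  have cj: "c \<le> rb_j T s x" using c(2) unfolding rb_j_def by simp
  have "x < T ! s ! c" using c(1) a cj by simp
  moreover have "T ! s ! c \<le> T ! s ! rb_j T s x"
  proof (cases "c = rb_j T s x")
    case False
    have "sorted_wrt (<) (T ! s)" using tT a unfolding tab_def by simp
    then show ?thesis using sorted_wrt_nth_less[of "(<)" "T ! s" c "rb_j T s x"] cj False a by simp
  qed simp
  ultimately show ?thesis by simp
qed

lemma rbT_len: "length (rb_T T s x) = length T" "\<forall>i<length T. length (rb_T T s x ! i) = length (T ! i)"
  using s1 sl unfolding rb_T_def by (auto simp: nth_list_update)

lemma rbT_row: "rb_T T s x ! (s - 1) = (T ! (s - 1))[rb_j T s x := x]"
  using s1 sl unfolding rb_T_def by simp

lemma rbT_other: "i \<noteq> s - 1 \<Longrightarrow> rb_T T s x ! i = T ! i"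
  unfolding rb_T_def by simp

lemma rbT_rowset: "set (rb_T T s x ! (s - 1)) = insert x (set (T ! (s - 1)) - {rb_y T s x})"
proof -
  have d: "distinct (T ! (s - 1))" using rw_sorted strict_sorted_iff by blast
  have "set ((T ! (s - 1))[rb_j T s x := x]) = set (take (rb_j T s x) (T ! (s - 1))) \<union> {x} \<union> set (drop (Suc (rb_j T s x)) (T ! (s - 1)))"
    by (rule set_upd_decomp(1)[OF rb_j_lt])
  moreover have "set (T ! (s - 1)) = set (take (rb_j T s x) (T ! (s - 1))) \<union> {rb_y T s x} \<union> set (drop (Suc (rb_j T s x)) (T ! (s - 1)))"
    unfolding rb_y_def by (rule set_upd_decomp(2)[OF rb_j_lt])
  moreover have "rb_y T s x \<notin> set (take (rb_j T s x) (T ! (s - 1))) \<union> set (drop (Suc (rb_j T s x)) (T ! (s - 1)))"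
  proof -
    have "T ! (s - 1) = take (rb_j T s x) (T ! (s - 1)) @ rb_y T s x # drop (Suc (rb_j T s x)) (T ! (s - 1))"
      unfolding rb_y_def by (rule id_take_nth_drop[OF rb_j_lt])
    then have "distinct (take (rb_j T s x) (T ! (s - 1)) @ rb_y T s x # drop (Suc (rb_j T s x)) (T ! (s - 1)))"
      using d by metis
    then show ?thesis by auto
  qed
  ultimately show ?thesis using rbT_row by auto
qed

lemma rbT_entries: "entries (rb_T T s x) = insert x (entries T - {rb_y T s x})"
proof -
  have sl': "s - 1 < length T" using s1 sl by simp
  have d: "distinct (concat T)" using tT tab_def by blast
  have e1: "entries (rb_T T s x) = entries (take (s - 1) T) \<union> set (rb_T T s x ! (s - 1)) \<union> entries (drop (Suc (s - 1)) T)"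
    unfolding rb_T_def using entries_upd_decomp(1)[OF sl'] sl' by simp
  have e2: "entries T = entries (take (s - 1) T) \<union> set (T ! (s - 1)) \<union> entries (drop (Suc (s - 1)) T)"
    by (rule entries_upd_decomp(2)[OF sl'])
  have T: "T = take (s - 1) T @ T ! (s - 1) # drop (Suc (s - 1)) T" using sl' by (rule id_take_nth_drop)
  have "distinct (concat (take (s - 1) T) @ T ! (s - 1) @ concat (drop (Suc (s - 1)) T))"
    using d T by (metis concat.simps(2) concat_append)
  then have "rb_y T s x \<notin> entries (take (s - 1) T) \<union> entries (drop (Suc (s - 1)) T)"
    using rb_y_in by (auto simp: entries_conv)
  then show ?thesis using e1 e2 rbT_rowset xT by auto
qed

lemma rbT_tab: "tab (rb_T T s x)"
proof -
  have sl': "s - 1 < length T" using s1 sl by simp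
  have d: "distinct (concat T)" using tT tab_def by blast
  have rows: "\<forall>rw\<in>set (rb_T T s x). sorted_wrt (<) rw"
  proof
    fix rw assume "rw \<in> set (rb_T T s x)"
    then obtain i where i: "i < length T" "rw = rb_T T s x ! i" using rbT_len by (auto simp: in_set_conv_nth)
    show "sorted_wrt (<) rw"
    proof (cases "i = s - 1")
      case True
      have "\<forall>i<rb_j T s x. T ! (s - 1) ! i < x" using rb_before rb_y_lt by auto
      then have "sorted_wrt (<) ((T ! (s - 1))[rb_j T s x := x])"
        using sorted_upd[OF rw_sorted rb_j_lt] rb_after by blast
      then show ?thesis using True i rbT_row by simp
    next
      case False
      then show ?thesis using i rbT_other tT unfolding tab_def by simp
    qed
  qed
  have dist: "distinct (concat (rb_T T s x))"
    unfolding rb_T_def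
  proof (rule dist_upd[OF d sl'])
    show "distinct ((T ! (s - 1))[rb_j T s x := x])"
      using rw_sorted x_notin_rw by (simp add: distinct_list_update strict_sorted_iff)
    have "entries T - set (T ! (s - 1)) \<subseteq> entries (take (s - 1) T) \<union> entries (drop (Suc (s - 1)) T)"
      using entries_upd_decomp(2)[OF sl'] by auto
    moreover have "set (T ! (s - 1)) \<inter> (entries (take (s - 1) T) \<union> entries (drop (Suc (s - 1)) T)) = {}"
    proof -
      have T: "T = take (s - 1) T @ T ! (s - 1) # drop (Suc (s - 1)) T" using sl' by (rule id_take_nth_drop)
      have "distinct (concat (take (s - 1) T) @ T ! (s - 1) @ concat (drop (Suc (s - 1)) T))"
        using d T by (metis concat.simps(2) concat_append)
      then show ?thesis by (auto simp: entries_conv)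
    qed
    ultimately show "set ((T ! (s - 1))[rb_j T s x := x]) \<inter> (entries T - set (T ! (s - 1))) = {}"
      using set_upd_decomp(1)[OF rb_j_lt, of x] xT by (auto dest: in_set_takeD in_set_dropD)
  qed
  have cols: "\<forall>i. Suc i < length (rb_T T s x) \<longrightarrow> length (rb_T T s x ! Suc i) \<le> length (rb_T T s x ! i) \<and>
      (\<forall>c<length (rb_T T s x ! Suc i). rb_T T s x ! i ! c < rb_T T s x ! Suc i ! c)"
  proof (intro allI impI)
    fix i assume i: "Suc i < length (rb_T T s x)"
    then have i': "Suc i < length T" using rbT_len by simp
    have tc: "length (T ! Suc i) \<le> length (T ! i)" "\<forall>c<length (T ! Suc i). T ! i ! c < T ! Suc i ! c"
      using tT i' unfolding tab_def by auto
    have l1: "length (rb_T T s x ! Suc i) \<le> length (rb_T T s x ! i)" using rbT_len i' tc by simp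
    have l2: "\<forall>c<length (rb_T T s x ! Suc i). rb_T T s x ! i ! c < rb_T T s x ! Suc i ! c"
    proof (intro allI impI)
      fix c assume c: "c < length (rb_T T s x ! Suc i)"
      then have c': "c < length (T ! Suc i)" using rbT_len i' by simp
      show "rb_T T s x ! i ! c < rb_T T s x ! Suc i ! c"
      proof (cases "Suc i = s - 1")
        case True
        then have "i \<noteq> s - 1" by simp
        then show ?thesis using True rbT_row rbT_other[of i] tc c' rb_y_lt
          by (cases "c = rb_j T s x") (auto simp: nth_list_update rb_y_def)
      next
        case F1: False
        show ?thesis
        proof (cases "i = s - 1")
          case True
          have ss: "s < length T" using True i' s1 by simp
          have "(T ! (s - 1))[rb_j T s x := x] ! c < T ! s ! c"
          proof (cases "c = rb_j T s x")
            case True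
            then show ?thesis using rb_col ss c' True \<open>i = s - 1\<close> s1 rb_j_lt by (simp add: nth_list_update)
          next
            case False
            then show ?thesis using tc c' \<open>i = s - 1\<close> s1 by (simp add: nth_list_update)
          qed
          then show ?thesis using True rbT_row rbT_other[of "Suc i"] F1 s1 by simp
        next
          case False
          then show ?thesis using F1 rbT_other tc c' by simp
        qed
      qed
    qed
    show "length (rb_T T s x ! Suc i) \<le> length (rb_T T s x ! i) \<and>
      (\<forall>c<length (rb_T T s x ! Suc i). rb_T T s x ! i ! c < rb_T T s x ! Suc i ! c)" using l1 l2 by blast
  qed
  show ?thesis unfolding tab_def using rows dist cols by blast
qed

lemma rbT_Qc: "2 \<le> s \<Longrightarrow> Qc (rb_T T s x) (s - 1) (rb_y T s x)"
proof -
  assume s2: "2 \<le> s"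
  have sl': "Suc (s - 2) < length T" using s2 sl by simp
  have tc: "length (T ! Suc (s - 2)) \<le> length (T ! (s - 2))" "\<forall>c<length (T ! Suc (s - 2)). T ! (s - 2) ! c < T ! Suc (s - 2) ! c"
    using tT sl' unfolding tab_def by auto
  have e: "Suc (s - 2) = s - 1" using s2 by simp
  show ?thesis unfolding Qc_def
  proof (rule exI[of _ "rb_j T s x"], intro conjI impI)
    show "rb_j T s x < length (rb_T T s x ! (s - 1 - 1))"
      using rb_j_lt tc(1) e rbT_len by (metis diff_diff_left le_less_trans less_le_trans one_add_one sl' Suc_lessD)
    show "rb_T T s x ! (s - 1 - 1) ! rb_j T s x < rb_y T s x"
      using tc(2) rb_j_lt e rbT_other[of "s - 2"] s2 unfolding rb_y_def
      by (metis diff_diff_left one_add_one n_not_Suc_n)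
    show "rb_y T s x < rb_T T s x ! (s - 1) ! rb_j T s x"
      using rbT_row rb_j_lt rb_y_lt by simp
  qed
qed

lemma rb_rowof_y: "rowof T (rb_y T s x) = s"
proof -
  have d: "distinct (concat T)" using tT tab_def by blast
  show ?thesis using rowof_Suc_iff[OF d, of "rb_y T s x" "s - 1"] rb_y_in s1 sl by simp
qed

lemma rb_rowof_x: "rowof (rb_T T s x) x = s"
proof -
  have d: "distinct (concat (rb_T T s x))" using rbT_tab tab_def by blast
  have "x \<in> set (rb_T T s x ! (s - 1))" using rbT_rowset by simp
  then show ?thesis using rowof_Suc_iff[OF d, of x "s - 1"] s1 sl rbT_len by simp
qed

lemma rb_rowof_other: "j \<noteq> x \<Longrightarrow> j \<noteq> rb_y T s x \<Longrightarrow> rowof (rb_T T s x) j = rowof T j"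
proof -
  assume j: "j \<noteq> x" "j \<noteq> rb_y T s x"
  have d: "distinct (concat T)" using tT tab_def by blast
  have d1: "distinct (concat (rb_T T s x))" using rbT_tab tab_def by blast
  have mem: "j \<in> set (rb_T T s x ! i) \<longleftrightarrow> j \<in> set (T ! i)" for i
    using rbT_rowset rbT_other j by (cases "i = s - 1") auto
  show ?thesis
  proof (cases "rowof T j")
    case 0
    then have "j \<notin> entries T" using rowof_0_iff by blast
    then have "j \<notin> entries (rb_T T s x)" using rbT_entries j by auto
    then show ?thesis using 0 rowof_0_iff[of "rb_T T s x" j] by simp
  next
    case (Suc i)
    then have "i < length T \<and> j \<in> set (T ! i)" using rowof_Suc_iff[OF d] by blast
    then have "rowof (rb_T T s x) j = Suc i" using rowof_Suc_iff[OF d1] mem rbT_len by simp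
    then show ?thesis using Suc by simp
  qed
qed

end


lemma trav_append: "trav N p (xs @ ys) = (fst (trav N p xs) @ fst (trav N (snd (trav N p xs)) ys), snd (trav N (snd (trav N p xs)) ys))"
  by (induction xs arbitrary: p) (auto simp: Let_def)

lemma trav_nomeet: "\<forall>j\<in>set xs. j \<noteq> p \<Longrightarrow> trav N p xs = (xs, p)"
  by (induction xs) (auto simp: Let_def tnx_def tout_def)

lemma upt_split3: "a \<le> y \<Longrightarrow> y < x \<Longrightarrow> [a..<x] = [a..<y] @ y # [Suc y..<x]"
proof -
  assume a: "a \<le> y" "y < x"
  have "[a..<x] = [a..<y] @ [y..<x]" using a upt_add_eq_append[of a y "x - y"] by simp
  also have "[y..<x] = y # [Suc y..<x]" using a by (simp add: upt_conv_Cons)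
  finally show ?thesis .
qed

lemma rev_upt_split3: "a \<le> y \<Longrightarrow> y < x \<Longrightarrow> rev [a..<x] = rev [Suc y..<x] @ y # rev [a..<y]"
  using upt_split3 by simp

lemma tw_len_eq:
  assumes "\<forall>i<j. P (xs ! i)" "j < length xs" "\<not> P (xs ! j)"
  shows "length (takeWhile P xs) = j"
proof -
  have "j \<le> length (takeWhile P xs)" by (rule length_takeWhile_less_P_nth) (use assms in auto)
  moreover have "\<not> j < length (takeWhile P xs)"
  proof
    assume "j < length (takeWhile P xs)"
    then have "takeWhile P xs ! j = xs ! j" by (rule takeWhile_nth)
    moreover have "takeWhile P xs ! j \<in> set (takeWhile P xs)" using \<open>j < length (takeWhile P xs)\<close> by (rule nth_mem)
    ultimately show False using assms(3) set_takeWhileD by fastforce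
  qed
  ultimately show ?thesis by simp
qed

lemma rb_inverse:
  "tab T \<Longrightarrow> x \<notin> entries T \<Longrightarrow> s \<le> length T \<Longrightarrow> (1 \<le> s \<longrightarrow> Qc T s x) \<Longrightarrow> rev_bump T s x = (T2, a) \<Longrightarrow>
   row_ins a T2 = (take s T @ fst (row_ins x (drop s T)), s + snd (row_ins x (drop s T)))"
proof (induction s arbitrary: T x)
  case 0
  then show ?case by (cases "row_ins x T") simp
next
  case (Suc s')
  define T1 where "T1 = rb_T T (Suc s') x"
  define y where "y = rb_y T (Suc s') x"
  define j0 where "j0 = rb_j T (Suc s') x"
  define rw where "rw = T ! s'"
  have q: "Qc T (Suc s') x" using Suc.prems by simp
  have s1: "1 \<le> Suc s'" by simp
  note ctx = Suc.prems(1,2) s1 Suc.prems(3) q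
  have rb: "rev_bump T1 s' y = (T2, a)" using Suc.prems(5) rev_bump_Suc T1_def y_def by metis
  have tT1: "tab T1" unfolding T1_def by (rule rbT_tab[OF ctx])
  have yT1: "y \<notin> entries T1" using rbT_entries[OF ctx] rb_y_lt[OF ctx] unfolding T1_def y_def by auto
  have lT1: "length T1 = length T" unfolding T1_def by (rule rbT_len(1)[OF ctx])
  have qT1: "1 \<le> s' \<longrightarrow> Qc T1 s' y" using rbT_Qc[OF ctx] unfolding T1_def y_def by simp
  have IH: "row_ins a T2 = (take s' T1 @ fst (row_ins y (drop s' T1)), s' + snd (row_ins y (drop s' T1)))"
    using Suc.IH[OF tT1 yT1 _ qT1 rb] lT1 Suc.prems(3) by simp
  have sl: "s' < length T" using Suc.prems(3) by simp
  have j0l: "j0 < length rw" using rb_j_lt[OF ctx] unfolding j0_def rw_def by simp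
  have yrw: "y = rw ! j0" unfolding y_def rb_y_def j0_def rw_def by simp
  have T1s: "T1 ! s' = rw[j0 := x]" using rbT_row[OF ctx] unfolding T1_def rw_def j0_def by simp
  have dr: "drop s' T1 = rw[j0 := x] # drop (Suc s') T"
    using T1s sl lT1 Cons_nth_drop_Suc[of s' T1] unfolding T1_def rb_T_def by simp
  have yx: "y < x" using rb_y_lt[OF ctx] unfolding y_def by simp
  have bef: "\<forall>i<j0. rw[j0 := x] ! i < y"
    using rb_before[OF ctx] unfolding j0_def y_def rw_def by (simp add: nth_list_update)
  have tw: "length (takeWhile (\<lambda>z. z < y) (rw[j0 := x])) = j0"
    by (rule tw_len_eq) (use bef j0l yx in auto)
  have "x \<in> set (rw[j0 := x])" using j0l by (simp add: set_update_memI)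
  then have nall: "\<not> (\<forall>z\<in>set (rw[j0 := x]). z < y)" using yx less_asym by blast
  have ri: "row_ins y (rw[j0 := x] # drop (Suc s') T) = (rw # fst (row_ins x (drop (Suc s') T)), Suc (snd (row_ins x (drop (Suc s') T))))"
    using row_ins_Cons_bump[OF nall tw[symmetric], of "drop (Suc s') T"] j0l yrw by simp
  have tk: "take s' T1 = take s' T" unfolding T1_def rb_T_def by simp
  have tk2: "take (Suc s') T = take s' T @ [rw]" using sl unfolding rw_def by (rule take_Suc_conv_app_nth)
  show ?case using IH dr ri tk tk2 by simp
qed


lemma LB:
  "tab T \<Longrightarrow> x \<notin> entries T \<Longrightarrow> 1 \<le> s \<Longrightarrow> s \<le> length T \<Longrightarrow> Qc T s x \<Longrightarrow> rev_bump T s x = (T2, a) \<Longrightarrow>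
   length T < N \<Longrightarrow> 0 \<notin> entries T \<Longrightarrow>
   (\<forall>j<x. j \<in> entries T \<longrightarrow> D j = N + 1 - rowof T j) \<Longrightarrow> (\<forall>j<x. j \<notin> entries T \<longrightarrow> D j < N + 1 - length T) \<Longrightarrow>
   a < x \<and> a \<in> entries T \<and> tab T2 \<and> entries T2 = insert x (entries T - {a}) \<and> length T2 = length T \<and>
   (\<forall>i<length T. length (T2 ! i) = length (T ! i)) \<and> rowof T2 x = s \<and>
   (\<forall>j. j \<noteq> x \<longrightarrow> (j < a \<or> x < j) \<longrightarrow> rowof T2 j = rowof T j) \<and> rowof T a = 1 \<and>
   trav N (N + 1 - s) (map D (rev [1..<x])) =
     (map (\<lambda>j. if j = a then 1 else if j \<in> entries T2 then N + 1 - rowof T2 j else D j) (rev [a..<x])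
        @ fst (trav N 1 (map D (rev [1..<a]))), snd (trav N 1 (map D (rev [1..<a]))))"
proof (induction s arbitrary: T x T2 a)
  case 0
  then show ?case by simp
next
  case (Suc s')
  define T1 where "T1 = rb_T T (Suc s') x"
  define y where "y = rb_y T (Suc s') x"
  note ctx = Suc.prems(1-5)
  have rb: "rev_bump T1 s' y = (T2, a)" using Suc.prems(6) rev_bump_Suc T1_def y_def by metis
  have dT: "distinct (concat T)" using Suc.prems(1) tab_def by blast
  have tT1: "tab T1" unfolding T1_def by (rule rbT_tab[OF ctx])
  have eT1: "entries T1 = insert x (entries T - {y})" using rbT_entries[OF ctx] unfolding T1_def y_def by simp
  have yx: "y < x" using rb_y_lt[OF ctx] unfolding y_def by simp
  have yT1: "y \<notin> entries T1" using eT1 yx by auto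
  have yT: "y \<in> entries T" using rb_y_in[OF ctx] Suc.prems(4) unfolding y_def entries_def by force
  have y1: "1 \<le> y" using yT Suc.prems(8) by (cases y) auto
  have lT1: "length T1 = length T" "\<forall>i<length T. length (T1 ! i) = length (T ! i)"
    using rbT_len[OF ctx] unfolding T1_def by auto
  have ry: "rowof T y = Suc s'" using rb_rowof_y[OF ctx] unfolding y_def by simp
  have rx1: "rowof T1 x = Suc s'" using rb_rowof_x[OF ctx] unfolding T1_def by simp
  have ro1: "\<And>j. j \<noteq> x \<Longrightarrow> j \<noteq> y \<Longrightarrow> rowof T1 j = rowof T j"
    using rb_rowof_other[OF ctx] unfolding T1_def y_def by simp
  have rmax: "\<forall>z\<in>set (T ! s'). z < x \<longrightarrow> z \<le> y" using rb_max[OF ctx] unfolding y_def by simp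
  have sN: "Suc s' < N" using Suc.prems(4,7) by simp
  (* the part (y, x) is passed unchanged *)
  have nomeet: "\<forall>j\<in>set (map D (rev [Suc y..<x])). j \<noteq> N + 1 - Suc s'"
  proof
    fix v assume "v \<in> set (map D (rev [Suc y..<x]))"
    then obtain j where j0: "j \<in> set (rev [Suc y..<x])" "v = D j" by (auto simp only: set_map)
    then have j: "y < j" "j < x" "v = D j" by auto
    show "v \<noteq> N + 1 - Suc s'"
    proof (cases "j \<in> entries T")
      case True
      have "rowof T j \<noteq> Suc s'"
      proof
        assume "rowof T j = Suc s'"
        then have "j \<in> set (T ! s')" using rowof_Suc_iff[OF dT] by blast
        then show False using rmax j by force
      qed
      moreover have "1 \<le> rowof T j" "rowof T j \<le> length T" using rowof_pos[OF True] rowof_le by auto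
      ultimately show ?thesis using j True Suc.prems(9) Suc.prems(7) Suc.prems(4) by auto
    next
      case False
      then show ?thesis using j Suc.prems(10) Suc.prems(4) by force
    qed
  qed
  have Dy: "D y = N + 1 - Suc s'" using Suc.prems(9) yx yT ry by simp
  have split: "rev [1..<x] = rev [Suc y..<x] @ y # rev [1..<y]" using y1 yx by (rule rev_upt_split3)
  define p0 where "p0 = N + 1 - Suc s'"
  have tnm: "trav N p0 (map D (rev [Suc y..<x])) = (map D (rev [Suc y..<x]), p0)"
    using trav_nomeet[OF nomeet[folded p0_def]] .
  have trav1: "trav N p0 (map D (rev [1..<x])) =
      (map D (rev [Suc y..<x]) @ tout N p0 (D y) # fst (trav N (tnx N p0 (D y)) (map D (rev [1..<y]))),
       snd (trav N (tnx N p0 (D y)) (map D (rev [1..<y]))))"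
    unfolding split map_append list.map(2) trav_append tnm by (simp add: Let_def)
  show ?case
  proof (cases s')
    case 0
    have T2: "T2 = T1" "a = y" using rb 0 by auto
    have tn: "tnx N p0 (D y) = 1" "tout N p0 (D y) = 1"
      using Dy 0 by (auto simp: tnx_def tout_def p0_def)
    have eq: "map D (rev [Suc y..<x]) = map (\<lambda>j. if j = a then 1 else if j \<in> entries T2 then N + 1 - rowof T2 j else D j) (rev [Suc y..<x])"
    proof (rule map_cong[OF refl])
      fix j assume "j \<in> set (rev [Suc y..<x])"
      then have j: "y < j" "j < x" by auto
      show "D j = (if j = a then 1 else if j \<in> entries T2 then N + 1 - rowof T2 j else D j)"
        using j T2 eT1 ro1[of j] Suc.prems(9) by auto
    qed
    have "rev [a..<x] = rev [Suc y..<x] @ [y]" using T2 yx rev_upt_split3[of y y x] by simp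
    then have main: "trav N p0 (map D (rev [1..<x])) =
     (map (\<lambda>j. if j = a then 1 else if j \<in> entries T2 then N + 1 - rowof T2 j else D j) (rev [a..<x])
        @ fst (trav N 1 (map D (rev [1..<a]))), snd (trav N 1 (map D (rev [1..<a]))))"
      using trav1 tn eq T2 by simp
    show ?thesis
      using main[unfolded p0_def] T2 yx yT tT1 eT1 lT1 rx1 ro1 ry 0 by auto
  next
    case (Suc s'')
    have s2: "2 \<le> Suc s'" using Suc by simp
    have qT1: "Qc T1 s' y" using rbT_Qc[OF ctx s2] unfolding T1_def y_def by simp
    have tn: "tnx N p0 (D y) = N + 1 - s'" "tout N p0 (D y) = N + 1 - s'"
      using Dy Suc sN by (auto simp: tnx_def tout_def p0_def)
    have x0: "x \<noteq> 0" using yx by simp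
    have pre1: "\<forall>j<y. j \<in> entries T1 \<longrightarrow> D j = N + 1 - rowof T1 j"
      using Suc.prems(9) eT1 yx ro1 by auto
    have pre2: "\<forall>j<y. j \<notin> entries T1 \<longrightarrow> D j < N + 1 - length T1"
      using Suc.prems(10) eT1 yx lT1 by auto
    have IH: "a < y \<and> a \<in> entries T1 \<and> tab T2 \<and> entries T2 = insert y (entries T1 - {a}) \<and> length T2 = length T1 \<and>
     (\<forall>i<length T1. length (T2 ! i) = length (T1 ! i)) \<and> rowof T2 y = s' \<and>
     (\<forall>j. j \<noteq> y \<longrightarrow> (j < a \<or> y < j) \<longrightarrow> rowof T2 j = rowof T1 j) \<and> rowof T1 a = 1 \<and>
     trav N (N + 1 - s') (map D (rev [1..<y])) =
     (map (\<lambda>j. if j = a then 1 else if j \<in> entries T2 then N + 1 - rowof T2 j else D j) (rev [a..<y])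
        @ fst (trav N 1 (map D (rev [1..<a]))), snd (trav N 1 (map D (rev [1..<a]))))"
    proof (rule Suc.IH[OF tT1 yT1 _ _ qT1 rb _ _ pre1 pre2])
      show "1 \<le> s'" using \<open>s' = Suc s''\<close> by simp
      show "s' \<le> length T1" using lT1(1) Suc.prems(4) by simp
      show "length T1 < N" using lT1(1) Suc.prems(7) by simp
      show "0 \<notin> entries T1" using eT1 x0 Suc.prems(8) by simp
    qed
    have ay: "a < y" "a \<in> entries T1" using IH by auto
    have aT: "a \<in> entries T" "a \<noteq> x" "a \<noteq> y" using ay eT1 yx by auto
    have eT2: "entries T2 = insert x (entries T - {a})" using IH eT1 aT yT by auto
    have rx2: "rowof T2 x = Suc s'" using IH rx1 yx by auto
    have ro2: "\<forall>j. j \<noteq> x \<longrightarrow> (j < a \<or> x < j) \<longrightarrow> rowof T2 j = rowof T j"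
    proof (intro allI impI)
      fix j assume j: "j \<noteq> x" "j < a \<or> x < j"
      then have "j \<noteq> y" "j < a \<or> y < j" using ay yx by auto
      then have "rowof T2 j = rowof T1 j" using IH by blast
      then show "rowof T2 j = rowof T j" using ro1 j \<open>j \<noteq> y\<close> by simp
    qed
    have ra: "rowof T a = 1" using IH ro1[of a] aT by simp
    have eq: "map D (rev [Suc y..<x]) = map (\<lambda>j. if j = a then 1 else if j \<in> entries T2 then N + 1 - rowof T2 j else D j) (rev [Suc y..<x])"
    proof (rule map_cong[OF refl])
      fix j assume "j \<in> set (rev [Suc y..<x])"
      then have j: "y < j" "j < x" by auto
      have "rowof T2 j = rowof T1 j" using IH j by auto
      then show "D j = (if j = a then 1 else if j \<in> entries T2 then N + 1 - rowof T2 j else D j)"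
        using j ay eT2 ro1[of j] Suc.prems(9) by auto
    qed
    have Dy2: "(if y = a then 1 else if y \<in> entries T2 then N + 1 - rowof T2 y else D y) = N + 1 - s'"
      using IH ay by auto
    have "rev [a..<x] = rev [Suc y..<x] @ y # rev [a..<y]" using ay yx by (intro rev_upt_split3) auto
    then have main: "trav N p0 (map D (rev [1..<x])) =
     (map (\<lambda>j. if j = a then 1 else if j \<in> entries T2 then N + 1 - rowof T2 j else D j) (rev [a..<x])
        @ fst (trav N 1 (map D (rev [1..<a]))), snd (trav N 1 (map D (rev [1..<a]))))"
      using trav1 tn eq IH Dy2 by simp
    show ?thesis
      using main[unfolded p0_def] IH lT1 rx2 ro2 ra aT eT2 yx by auto
  qed
qed


lemma row_add: "1 \<le> k \<Longrightarrow> 1 \<le> r \<Longrightarrow> row (add_to_row T k x) r = (if r = k then row T k @ [x] else row T r)"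
proof -
  assume a: "1 \<le> k" "1 \<le> r"
  have l: "length (add_to_row T k x) = max (length T) k" by (rule add_to_row_length[OF a(1)])
  show ?thesis
  proof (cases "r \<le> length (add_to_row T k x)")
    case True
    then have "row (add_to_row T k x) r = add_to_row T k x ! (r - 1)" using a by (simp add: row_def)
    also have "\<dots> = (if r - 1 = k - 1 then row T k @ [x] else if r - 1 < length T then T ! (r - 1) else [])"
      using add_to_row_nth[OF a(1)] True a(2) by simp
    finally show ?thesis using a by (auto simp: row_def)
  next
    case False
    then show ?thesis using l a by (auto simp: row_def)
  qed
qed

lemma entries_rows: "j \<in> entries T \<longleftrightarrow> (\<exists>r\<ge>1. j \<in> set (row T r))"
proof
  assume "j \<in> entries T"
  then obtain rw where rw: "rw \<in> set T" "j \<in> set rw" by (auto simp: entries_def)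
  then obtain i where i0: "i < length T" "rw = T ! i" by (auto simp: in_set_conv_nth)
  then have i: "i < length T" "j \<in> set (T ! i)" using rw by auto
  then show "\<exists>r\<ge>1. j \<in> set (row T r)" by (intro exI[of _ "Suc i"]) (simp add: row_def)
next
  assume "\<exists>r\<ge>1. j \<in> set (row T r)"
  then obtain r where r: "r \<ge> 1" "j \<in> set (row T r)" by blast
  then have "r \<le> length T" "j \<in> set (T ! (r - 1))" by (auto simp: row_def split: if_splits)
  then show "j \<in> entries T" using r(1) by (auto simp: entries_def)
qed

lemma rowof_eq_rows:
  assumes "distinct (concat T)" "distinct (concat T')" "\<forall>r\<ge>1. j \<in> set (row T r) \<longleftrightarrow> j \<in> set (row T' r)"
  shows "rowof T' j = rowof T j"
proof (cases "j \<in> entries T")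
  case True
  then have jT': "j \<in> entries T'" using assms(3) entries_rows by blast
  have "j \<in> set (row T (rowof T j))" using in_row_iff[OF assms(1) rowof_pos[OF True]] True by simp
  then have "j \<in> set (row T' (rowof T j))" using assms(3) rowof_pos[OF True] by blast
  then show ?thesis using in_row_iff[OF assms(2) rowof_pos[OF True]] by simp
next
  case False
  then have "j \<notin> entries T'" using assms(3) entries_rows by blast
  then show ?thesis using False rowof_0_iff by metis
qed

lemma entry_nth: "i < length T \<Longrightarrow> c < length (T ! i) \<Longrightarrow> T ! i ! c \<in> entries T"
proof -
  assume a: "i < length T" "c < length (T ! i)"
  have "T ! i \<in> set T" using a by simp
  moreover have "T ! i ! c \<in> set (T ! i)" using a by simp
  ultimately show ?thesis unfolding entries_def by blast
qed

lemma tab_rows: "tab T \<Longrightarrow> rw \<in> set T \<Longrightarrow> sorted_wrt (<) rw"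
  by (simp add: tab_def)
lemma tab_dist: "tab T \<Longrightarrow> distinct (concat T)"
  by (simp add: tab_def)
lemma tab_col: "tab T \<Longrightarrow> Suc s < length T \<Longrightarrow> length (T ! Suc s) \<le> length (T ! s) \<and> (\<forall>c<length (T ! Suc s). T ! s ! c < T ! Suc s ! c)"
  by (simp add: tab_def)

lemma tabI:
  assumes "\<And>i. i < length T \<Longrightarrow> sorted_wrt (<) (T ! i)" "distinct (concat T)"
    "\<And>s. Suc s < length T \<Longrightarrow> length (T ! Suc s) \<le> length (T ! s)"
    "\<And>s c. Suc s < length T \<Longrightarrow> c < length (T ! Suc s) \<Longrightarrow> T ! s ! c < T ! Suc s ! c"
  shows "tab T"
  unfolding tab_def using assms by (auto simp: in_set_conv_nth)

lemma tab_add: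
  fixes M :: nat
  assumes tT: "tab T" and M: "\<forall>y\<in>entries T. y < M" and r: "1 \<le> r" "r \<le> Suc (length T)"
    and sh: "2 \<le> r \<longrightarrow> length (row T r) < length (row T (r - 1))"
  shows "tab (add_to_row T r M)"
proof (cases "r \<le> length T")
  case True
  define rw where "rw = T ! (r - 1)"
  have rl: "r - 1 < length T" using True r by simp
  have eq: "add_to_row T r M = T[r - 1 := rw @ [M]]" using rl by (simp add: add_to_row_def rw_def)
  have rwin: "rw \<in> set T" using rl rw_def by simp
  have rwM: "\<forall>y\<in>set rw. y < M" using M rwin by (auto simp: entries_def)
  have srw: "sorted_wrt (<) (rw @ [M])" using tab_rows[OF tT rwin] rwM by (simp add: sorted_wrt_append)
  show ?thesis unfolding eq
  proof (rule tabI)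
    fix i assume "i < length (T[r - 1 := rw @ [M]])"
    then show "sorted_wrt (<) (T[r - 1 := rw @ [M]] ! i)"
      using srw tab_rows[OF tT] by (cases "i = r - 1") (auto simp: nth_list_update)
  next
    show "distinct (concat (T[r - 1 := rw @ [M]]))"
    proof (rule dist_upd[OF tab_dist[OF tT] rl])
      show "distinct (rw @ [M])" using srw strict_sorted_iff by blast
      show "set (rw @ [M]) \<inter> (entries T - set (T ! (r - 1))) = {}" using M rw_def by auto
    qed
  next
    fix s assume s: "Suc s < length (T[r - 1 := rw @ [M]])"
    then have s': "Suc s < length T" by simp
    note tc = tab_col[OF tT s']
    show "length (T[r - 1 := rw @ [M]] ! Suc s) \<le> length (T[r - 1 := rw @ [M]] ! s)"
    proof (cases "Suc s = r - 1")
      case True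
      have s_eq: "s = r - Suc (Suc 0)" and r2: "2 \<le> r" using True by auto
      have "length (row T r) < length (row T (r - 1))" using sh r2 by simp
      moreover have "row T r = T ! (r - 1)" "row T (r - 1) = T ! s" using r2 rl s_eq by (auto simp: row_def)
      ultimately have "length rw < length (T ! s)" using rw_def by simp
      then show ?thesis using True rl by (simp add: nth_list_update)
    next
      case False
      then show ?thesis using tc s' rl by (auto simp: nth_list_update rw_def)
    qed
  next
    fix s c assume s: "Suc s < length (T[r - 1 := rw @ [M]])" and c: "c < length (T[r - 1 := rw @ [M]] ! Suc s)"
    then have s': "Suc s < length T" by simp
    note tc = tab_col[OF tT s']
    have TsM: "T ! s ! c < M" if "c < length (T ! s)" using M entry_nth[of s T c] that s' by simp
    show "T[r - 1 := rw @ [M]] ! s ! c < T[r - 1 := rw @ [M]] ! Suc s ! c"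
    proof (cases "Suc s = r - 1")
      case True
      then have ne: "s \<noteq> r - 1" by simp
      have cl: "c < Suc (length rw)" using c True rl by simp
      have s_eq: "s = r - Suc (Suc 0)" and r2: "2 \<le> r" using True by auto
      have "length (row T r) < length (row T (r - 1))" using sh r2 by simp
      moreover have "row T r = T ! (r - 1)" "row T (r - 1) = T ! s" using r2 rl s_eq by (auto simp: row_def)
      ultimately have "length rw < length (T ! s)" using rw_def by simp
      then show ?thesis using True ne c tc TsM cl rl
        by (cases "c < length rw") (auto simp: nth_list_update nth_append rw_def)
    next
      case F: False
      show ?thesis
      proof (cases "s = r - 1")
        case True
        then show ?thesis using F tc c s' rl by (auto simp: nth_list_update nth_append rw_def)
      next
        case False
        then show ?thesis using F tc c s' rl by (auto simp: nth_list_update)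
      qed
    qed
  qed
next
  case False
  then have rl: "r = Suc (length T)" using r by simp
  have eq: "add_to_row T r M = T @ [[M]]" using rl by (simp add: add_to_row_def)
  show ?thesis unfolding eq
  proof (rule tabI)
    fix i assume "i < length (T @ [[M]])"
    then show "sorted_wrt (<) ((T @ [[M]]) ! i)" using tab_rows[OF tT] by (cases "i < length T") (auto simp: nth_append)
  next
    show "distinct (concat (T @ [[M]]))" using tab_dist[OF tT] M by (auto simp: entries_def)
  next
    fix s assume s: "Suc s < length (T @ [[M]])"
    show "length ((T @ [[M]]) ! Suc s) \<le> length ((T @ [[M]]) ! s)"
    proof (cases "Suc s < length T")
      case True then show ?thesis using tab_col[OF tT True] by (simp add: nth_append)
    next
      case False
      then have "Suc s = length T" using s by simp
      moreover have "length (row T r) < length (row T (r - 1))" using sh rl \<open>Suc s = length T\<close> by simp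
      moreover have "row T (r - 1) = T ! s"
      proof -
        have e: "r - 1 = Suc s" using rl \<open>Suc s = length T\<close> by simp
        show ?thesis unfolding e row_def by (simp add: \<open>Suc s = length T\<close>[symmetric])
      qed
      ultimately have "length (row T r) < length (T ! s)" by simp
      then have "0 < length (T ! s)" by linarith
      then show ?thesis using \<open>Suc s = length T\<close> by (simp add: nth_append Suc_le_eq)
    qed
  next
    fix s c assume s: "Suc s < length (T @ [[M]])" and c: "c < length ((T @ [[M]]) ! Suc s)"
    show "(T @ [[M]]) ! s ! c < (T @ [[M]]) ! Suc s ! c"
    proof (cases "Suc s < length T")
      case True then show ?thesis using tab_col[OF tT True] c by (simp add: nth_append)
    next
      case False
      then have e: "Suc s = length T" using s by simp
      have "length (row T r) < length (row T (r - 1))" using sh rl e by simp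
      moreover have "row T (r - 1) = T ! s"
      proof -
        have e2: "r - 1 = Suc s" using rl e by simp
        show ?thesis unfolding e2 row_def by (simp add: e[symmetric])
      qed
      ultimately have "length (row T r) < length (T ! s)" by simp
      then have "0 < length (T ! s)" by linarith
      then have "T ! s ! 0 < M" using M entry_nth[of s T 0] e by simp
      then show ?thesis using e c by (simp add: nth_append)
    qed
  qed
qed

lemma tab_butlast:
  assumes tT: "tab T" and r: "1 \<le> r" "r \<le> length T" and ne: "T ! (r - 1) \<noteq> []"
    and sh: "r < length T \<longrightarrow> length (T ! r) < length (T ! (r - 1))"
  shows "tab (T[r - 1 := butlast (T ! (r - 1))])"
proof -
  define rw where "rw = T ! (r - 1)"
  have rl: "r - 1 < length T" using r by simp
  have rwin: "rw \<in> set T" using rl rw_def by simp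
  have srw0: "sorted_wrt (<) rw" using tab_rows[OF tT rwin] .
  have bl: "rw = butlast rw @ [last rw]" using ne rw_def by simp
  have srw: "sorted_wrt (<) (butlast rw)" using srw0 bl by (metis sorted_wrt_append)
  have nb: "\<And>c. c < length (butlast rw) \<Longrightarrow> butlast rw ! c = rw ! c" by (simp add: nth_butlast)
  show ?thesis unfolding rw_def[symmetric]
  proof (rule tabI)
    fix i assume "i < length (T[r - 1 := butlast rw])"
    then show "sorted_wrt (<) (T[r - 1 := butlast rw] ! i)"
      using srw tab_rows[OF tT] by (cases "i = r - 1") (auto simp: nth_list_update)
  next
    show "distinct (concat (T[r - 1 := butlast rw]))"
    proof (rule dist_upd[OF tab_dist[OF tT] rl])
      show "distinct (butlast rw)" using srw strict_sorted_iff by blast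
      show "set (butlast rw) \<inter> (entries T - set (T ! (r - 1))) = {}" using rw_def in_set_butlastD by fastforce
    qed
  next
    fix s assume s: "Suc s < length (T[r - 1 := butlast rw])"
    then have s': "Suc s < length T" by simp
    note tc = tab_col[OF tT s']
    show "length (T[r - 1 := butlast rw] ! Suc s) \<le> length (T[r - 1 := butlast rw] ! s)"
    proof (cases "s = r - 1")
      case True
      then have "length (T ! r) < length rw" using sh s' r rw_def by simp
      then show ?thesis using True s' rl r by (auto simp: nth_list_update)
    next
      case False
      then show ?thesis using tc s' rl by (auto simp: nth_list_update rw_def)
    qed
  next
    fix s c assume s: "Suc s < length (T[r - 1 := butlast rw])" and c: "c < length (T[r - 1 := butlast rw] ! Suc s)"
    then have s': "Suc s < length T" by simp
    note tc = tab_col[OF tT s']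
    show "T[r - 1 := butlast rw] ! s ! c < T[r - 1 := butlast rw] ! Suc s ! c"
    proof (cases "Suc s = r - 1")
      case True
      then have ne: "s \<noteq> r - 1" by simp
      then show ?thesis using True c tc rl nb rw_def by (auto simp: nth_list_update)
    next
      case F: False
      show ?thesis
      proof (cases "s = r - 1")
        case True
        have sr: "Suc s = r" using True r by simp
        have lt: "length (T ! r) < length rw" using sh s' r True rw_def by simp
        have c1: "c < length (T ! r)" using c sr F by (simp add: nth_list_update)
        then have c2: "c < length (butlast rw)" using lt by simp
        have "rw ! c < T ! r ! c" using tc c1 sr True rw_def by simp
        then show ?thesis using True F c2 nb rl sr by (simp add: nth_list_update)
      next
        case False
        then show ?thesis using F tc c s' rl by (auto simp: nth_list_update)
      qed
    qed
  qed
qed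


definition Ef :: "nat \<Rightarrow> tableau \<Rightarrow> nat \<Rightarrow> nat" where "Ef N T j = N + 1 - rowof T j"
definition Apf :: "tableau \<Rightarrow> nat \<Rightarrow> bool" where "Apf T j \<longleftrightarrow> j \<notin> entries T"

definition INVd :: "nat \<Rightarrow> nat \<Rightarrow> (nat \<Rightarrow> nat) \<Rightarrow> tableau \<Rightarrow> (nat \<Rightarrow> nat) \<Rightarrow> nat list \<Rightarrow> nat list \<Rightarrow> bool" where
  "INVd N k sh T I d c \<longleftrightarrow> tab T \<and> entries T \<subseteq> {1..k} \<and> length T \<le> k \<and> (\<forall>r\<ge>1. length (row T r) = sh r) \<and>
     (\<forall>j. 1 \<le> j \<and> j \<le> k \<and> j \<notin> entries T \<longrightarrow> 1 \<le> I j \<and> I j \<le> k) \<and>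
     d = snd (irun (Ef N T) (Apf T) I T (rev [1..<Suc k])) \<and> length c = k \<and>
     (\<forall>j. 1 \<le> j \<and> j \<le> k \<longrightarrow> j \<in> set (row (fst (irun (Ef N T) (Apf T) I T (rev [1..<Suc k]))) (c ! (k - j))))"

lemma js_Suc: "rev [1..<Suc (Suc k)] = Suc k # rev [1..<Suc k]"
  by simp

lemma row_pos: "j \<in> set (row T r) \<Longrightarrow> 1 \<le> r"
  by (cases r) (auto simp: row_def)

lemma c_claim_step:
  assumes "\<forall>j. 1 \<le> j \<and> j \<le> k \<longrightarrow> j \<in> set (row P (c ! (k - j)))" "1 \<le> p"
  shows "\<forall>j. 1 \<le> j \<and> j \<le> Suc k \<longrightarrow> j \<in> set (row (add_to_row P p (Suc k)) ((p # c) ! (Suc k - j)))"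
proof (intro allI impI)
  fix j assume j: "1 \<le> j \<and> j \<le> Suc k"
  show "j \<in> set (row (add_to_row P p (Suc k)) ((p # c) ! (Suc k - j)))"
  proof (cases "j = Suc k")
    case True
    then show ?thesis using mem_row_add[OF assms(2) assms(2)] by simp
  next
    case False
    then have jk: "j \<le> k" "1 \<le> j" using j by auto
    then have m: "j \<in> set (row P (c ! (k - j)))" using assms(1) by blast
    have e: "(p # c) ! (Suc k - j) = c ! (k - j)" using jk by (simp add: Suc_diff_le)
    show ?thesis unfolding e using mem_row_add[OF assms(2) row_pos[OF m]] m by simp
  qed
qed

lemma rowof_bound: "j \<in> entries T \<Longrightarrow> 1 \<le> rowof T j \<and> rowof T j \<le> length T"
  using rowof_pos rowof_le by blast

lemma INVd_Add:
  assumes inv: "INVd N k sh T I d c" and r1: "1 \<le> r" and part: "is_partition (sh(r := sh r + 1))" and Nb: "4 * k + 8 \<le> N"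
  shows "INVd N (Suc k) (sh(r := sh r + 1)) (add_to_row T r (Suc k)) I (psiD N (Add r) # fst (trav N (psiP N (Add r)) d))
           (snd (trav N (psiP N (Add r)) d) # c)"
proof -
  define js where "js = rev [1..<Suc k]"
  define T' where "T' = add_to_row T r (Suc k)"
  have tT: "tab T" and eT: "entries T \<subseteq> {1..k}" and lT: "length T \<le> k" and shT: "\<forall>r\<ge>1. length (row T r) = sh r"
    and IT: "\<forall>j. 1 \<le> j \<and> j \<le> k \<and> j \<notin> entries T \<longrightarrow> 1 \<le> I j \<and> I j \<le> k"
    and dT: "d = snd (irun (Ef N T) (Apf T) I T js)" and lc: "length c = k"
    and cT: "\<forall>j. 1 \<le> j \<and> j \<le> k \<longrightarrow> j \<in> set (row (fst (irun (Ef N T) (Apf T) I T js)) (c ! (k - j)))"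
    using inv unfolding INVd_def js_def by auto
  have shr: "2 \<le> r \<longrightarrow> length (row T r) < length (row T (r - 1))"
  proof
    assume r2: "2 \<le> r"
    have pp: "\<forall>q\<ge>1. (sh(r := sh r + 1)) (Suc q) \<le> (sh(r := sh r + 1)) q" using part unfolding is_partition_def by blast
    have "1 \<le> r - 1" using r2 by simp
    then have "(sh(r := sh r + 1)) (Suc (r - 1)) \<le> (sh(r := sh r + 1)) (r - 1)" using pp by blast
    moreover have "Suc (r - 1) = r" "r - 1 \<noteq> r" using r2 by auto
    ultimately have "sh r + 1 \<le> sh (r - 1)" by simp
    then show "length (row T r) < length (row T (r - 1))" using shT r2 r1 by simp
  qed
  have rl: "r \<le> Suc (length T)"
  proof (cases "2 \<le> r")
    case True
    then have "length (row T r) < length (row T (r - 1))" using shr by simp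
    then have "0 < length (row T (r - 1))" by linarith
    then have "r - 1 \<le> length T" by (auto simp: row_def split: if_splits)
    then show ?thesis by simp
  next
    case False then show ?thesis using r1 by simp
  qed
  have Mgt: "\<forall>y\<in>entries T. y < Suc k" using eT by auto
  have tT': "tab T'" unfolding T'_def by (rule tab_add[OF tT Mgt r1 rl shr])
  have eT': "entries T' = insert (Suc k) (entries T)" unfolding T'_def by (rule entries_add[OF r1])
  have lT': "length T' \<le> Suc k" unfolding T'_def using add_to_row_length[OF r1, of T "Suc k"] rl lT by simp
  have rowT': "\<And>q. 1 \<le> q \<Longrightarrow> row T' q = (if q = r then row T r @ [Suc k] else row T q)"
    unfolding T'_def using row_add[OF r1] by simp
  have shT': "\<forall>q\<ge>1. length (row T' q) = (sh(r := sh r + 1)) q" using rowT' shT by simp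
  have dist: "distinct (concat T)" "distinct (concat T')" using tT tT' tab_dist by auto
  have rowof': "\<And>j. j \<noteq> Suc k \<Longrightarrow> rowof T' j = rowof T j"
    by (rule rowof_eq_rows[OF dist]) (simp add: rowT')
  have rowofk: "rowof T' (Suc k) = r"
  proof -
    have "Suc k \<in> set (row T' r)" using rowT'[OF r1] by simp
    then show ?thesis using in_row_iff[OF dist(2) r1] by simp
  qed
  have jsk: "\<forall>j\<in>set js. 1 \<le> j \<and> j \<le> k" unfolding js_def by auto
  have cong: "irun (Ef N T') (Apf T') I T' js = irun (Ef N T) (Apf T) I T' js"
  proof (rule irun_cong)
    show "\<forall>j\<in>set js. Apf T' j = Apf T j \<and> (Apf T' j \<longrightarrow> I j = I j) \<and> (\<not> Apf T' j \<longrightarrow> Ef N T' j = Ef N T j)"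
      using jsk eT' rowof' by (auto simp: Apf_def Ef_def)
  qed
  have new: "irun (Ef N T') (Apf T') I T' (rev [1..<Suc (Suc k)]) =
      (fst (irun (Ef N T) (Apf T) I T' js), (N + 1 - r) # snd (irun (Ef N T) (Apf T) I T' js))"
    unfolding js_Suc js_def[symmetric] using eT' rowofk cong by (simp add: Apf_def Ef_def)
  have M: "fst (trav N r d) = snd (irun (Ef N T) (Apf T) I (add_to_row T r (Suc k)) js)
    \<and> fst (irun (Ef N T) (Apf T) I (add_to_row T r (Suc k)) js) = add_to_row (fst (irun (Ef N T) (Apf T) I T js)) (snd (trav N r d)) (Suc k)
    \<and> r \<le> snd (trav N r d) \<and> snd (trav N r d) \<le> r + length js"
    unfolding dT
  proof (rule irun_trav_M[where B = "N + 1 - k"])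
    show "\<forall>y\<in>entries T. y < Suc k" by (rule Mgt)
    show "\<forall>j\<in>set js. Apf T j \<longrightarrow> I j < Suc k" using jsk IT by (auto simp: Apf_def)
    show "1 \<le> r" by (rule r1)
    show "r \<le> Suc (length T)" by (rule rl)
    show "\<forall>j\<in>set js. \<not> Apf T j \<longrightarrow> N + 1 - k \<le> Ef N T j"
    proof (intro ballI impI)
      fix j assume "\<not> Apf T j"
      then have "rowof T j \<le> k" using rowof_bound[of j T] lT by (simp add: Apf_def)
      then show "N + 1 - k \<le> Ef N T j" by (simp add: Ef_def)
    qed
    have ljs: "length js = k" unfolding js_def by simp
    show "r + length js < N + 1 - k" using rl lT Nb ljs by linarith
    show "r + length js < N" using rl lT Nb ljs by linarith
  qed
  have pD: "psiD N (Add r) = N + 1 - r" "psiP N (Add r) = r" by (simp_all add: psiD_def psiP_def)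
  have Ipr: "\<forall>j. 1 \<le> j \<and> j \<le> Suc k \<and> j \<notin> entries T' \<longrightarrow> 1 \<le> I j \<and> I j \<le> Suc k"
  proof (intro allI impI)
    fix j assume j: "1 \<le> j \<and> j \<le> Suc k \<and> j \<notin> entries T'"
    then have "j \<noteq> Suc k" "j \<notin> entries T" using eT' by auto
    then have "1 \<le> j \<and> j \<le> k \<and> j \<notin> entries T" using j by auto
    then show "1 \<le> I j \<and> I j \<le> Suc k" using IT by fastforce
  qed
  have cl: "\<forall>j. 1 \<le> j \<and> j \<le> Suc k \<longrightarrow> j \<in> set (row (fst (irun (Ef N T') (Apf T') I T' (rev [1..<Suc (Suc k)]))) ((snd (trav N r d) # c) ! (Suc k - j)))"
  proof -
    have e: "fst (irun (Ef N T) (Apf T) I T' js) = add_to_row (fst (irun (Ef N T) (Apf T) I T js)) (snd (trav N r d)) (Suc k)"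
      using M unfolding T'_def by simp
    have p1: "1 \<le> snd (trav N r d)" using M r1 by simp
    show ?thesis unfolding new fst_conv e using c_claim_step[OF cT p1] .
  qed
  have dn: "psiD N (Add r) # fst (trav N (psiP N (Add r)) d) = snd (irun (Ef N T') (Apf T') I T' (rev [1..<Suc (Suc k)]))"
    unfolding new snd_conv pD using M unfolding T'_def by simp
  have ent: "entries T' \<subseteq> {1..Suc k}" using eT' eT by auto
  show ?thesis unfolding INVd_def T'_def[symmetric]
    using tT' ent lT' shT' Ipr dn cl lc pD by simp
qed


lemma INVd_Emp:
  assumes inv: "INVd N k sh T I d c" and Nb: "4 * k + 8 \<le> N"
  shows "INVd N (Suc k) sh T (I(Suc k := Suc k)) (psiD N Emp # fst (trav N (psiP N Emp) d))
           (snd (trav N (psiP N Emp) d) # c)"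
proof -
  define js where "js = rev [1..<Suc k]"
  define I' where "I' = I(Suc k := Suc k)"
  have tT: "tab T" and eT: "entries T \<subseteq> {1..k}" and lT: "length T \<le> k" and shT: "\<forall>r\<ge>1. length (row T r) = sh r"
    and IT: "\<forall>j. 1 \<le> j \<and> j \<le> k \<and> j \<notin> entries T \<longrightarrow> 1 \<le> I j \<and> I j \<le> k"
    and dT: "d = snd (irun (Ef N T) (Apf T) I T js)" and lc: "length c = k"
    and cT: "\<forall>j. 1 \<le> j \<and> j \<le> k \<longrightarrow> j \<in> set (row (fst (irun (Ef N T) (Apf T) I T js)) (c ! (k - j)))"
    using inv unfolding INVd_def js_def by auto
  have Mgt: "\<forall>y\<in>entries T. y < Suc k" using eT by auto
  have kT: "Suc k \<notin> entries T" using eT by auto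
  have jsk: "\<forall>j\<in>set js. 1 \<le> j \<and> j \<le> k" unfolding js_def by auto
  have cong: "irun (Ef N T) (Apf T) I' (add_to_row T 1 (Suc k)) js = irun (Ef N T) (Apf T) I (add_to_row T 1 (Suc k)) js"
    by (rule irun_cong) (use jsk in \<open>auto simp: I'_def\<close>)
  have ri: "row_ins (I' (Suc k)) T = (add_to_row T 1 (Suc k), 1)"
    using row_ins_max[OF Mgt] by (simp add: I'_def)
  have new: "irun (Ef N T) (Apf T) I' T (rev [1..<Suc (Suc k)]) =
      (fst (irun (Ef N T) (Apf T) I (add_to_row T 1 (Suc k)) js), 1 # snd (irun (Ef N T) (Apf T) I (add_to_row T 1 (Suc k)) js))"
    unfolding js_Suc js_def[symmetric] using kT ri cong by (simp add: Apf_def)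
  have M: "fst (trav N 1 d) = snd (irun (Ef N T) (Apf T) I (add_to_row T 1 (Suc k)) js)
    \<and> fst (irun (Ef N T) (Apf T) I (add_to_row T 1 (Suc k)) js) = add_to_row (fst (irun (Ef N T) (Apf T) I T js)) (snd (trav N 1 d)) (Suc k)
    \<and> 1 \<le> snd (trav N 1 d) \<and> snd (trav N 1 d) \<le> 1 + length js"
    unfolding dT
  proof (rule irun_trav_M[where B = "N + 1 - k"])
    show "\<forall>y\<in>entries T. y < Suc k" by (rule Mgt)
    show "\<forall>j\<in>set js. Apf T j \<longrightarrow> I j < Suc k" using jsk IT by (auto simp: Apf_def)
    show "(1::nat) \<le> 1" by simp
    show "1 \<le> Suc (length T)" by simp
    show "\<forall>j\<in>set js. \<not> Apf T j \<longrightarrow> N + 1 - k \<le> Ef N T j"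
    proof (intro ballI impI)
      fix j assume "\<not> Apf T j"
      then have "rowof T j \<le> k" using rowof_bound[of j T] lT by (simp add: Apf_def)
      then show "N + 1 - k \<le> Ef N T j" by (simp add: Ef_def)
    qed
    have ljs: "length js = k" unfolding js_def by simp
    show "1 + length js < N + 1 - k" using lT Nb ljs by linarith
    show "1 + length js < N" using lT Nb ljs by linarith
  qed
  have pD: "psiD N Emp = 1" "psiP N Emp = 1" by (simp_all add: psiD_def psiP_def)
  have Ipr: "\<forall>j. 1 \<le> j \<and> j \<le> Suc k \<and> j \<notin> entries T \<longrightarrow> 1 \<le> I' j \<and> I' j \<le> Suc k"
  proof (intro allI impI)
    fix j assume j: "1 \<le> j \<and> j \<le> Suc k \<and> j \<notin> entries T"
    show "1 \<le> I' j \<and> I' j \<le> Suc k"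
    proof (cases "j = Suc k")
      case True then show ?thesis by (simp add: I'_def)
    next
      case False
      then have "1 \<le> j \<and> j \<le> k \<and> j \<notin> entries T" using j by auto
      then show ?thesis using IT False by (fastforce simp: I'_def)
    qed
  qed
  have cl: "\<forall>j. 1 \<le> j \<and> j \<le> Suc k \<longrightarrow> j \<in> set (row (fst (irun (Ef N T) (Apf T) I' T (rev [1..<Suc (Suc k)]))) ((snd (trav N 1 d) # c) ! (Suc k - j)))"
  proof -
    have p1: "1 \<le> snd (trav N 1 d)" using M by simp
    show ?thesis unfolding new fst_conv using M c_claim_step[OF cT p1] by simp
  qed
  have dn: "psiD N Emp # fst (trav N (psiP N Emp) d) = snd (irun (Ef N T) (Apf T) I' T (rev [1..<Suc (Suc k)]))"
    unfolding new snd_conv pD using M by simp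
  have ent: "entries T \<subseteq> {1..Suc k}" using eT by auto
  have lT': "length T \<le> Suc k" using lT by simp
  show ?thesis unfolding INVd_def I'_def[symmetric]
    using tT ent lT' shT Ipr dn cl lc pD by simp
qed


lemma irun_fst_E: "fst (irun E Ap I S js) = fst (irun E' Ap I S js)"
  by (induction js arbitrary: S) auto

lemma last_max: "sorted_wrt (<) (rw :: nat list) \<Longrightarrow> rw \<noteq> [] \<Longrightarrow> z \<in> set rw \<Longrightarrow> z \<le> last rw"
proof -
  assume a: "sorted_wrt (<) rw" "rw \<noteq> []" "z \<in> set rw"
  have "rw = butlast rw @ [last rw]" using a(2) by simp
  then have "sorted_wrt (<) (butlast rw @ [last rw])" using a(1) by metis
  then have "\<forall>y\<in>set (butlast rw). y < last rw" by (simp add: sorted_wrt_append)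
  moreover have "z \<in> set (butlast rw @ [last rw])" using a(2,3) by simp
  then have "z \<in> set (butlast rw) \<or> z = last rw" by auto
  ultimately show ?thesis by auto
qed

lemma rev_ins_from_eq: "rev_ins_from T r = rev_bump (T[r - 1 := butlast (T ! (r - 1))]) (r - 1) (last (T ! (r - 1)))"
  by (simp add: rev_ins_from_def Let_def)

lemma Rem_K:
  fixes T :: tableau and Q :: "nat \<Rightarrow> nat"
  assumes tT: "tab T" and eT: "entries T \<subseteq> {1..k}" and lT: "length T \<le> k" and r1: "1 \<le> r" and rl: "r \<le> length T"
    and ne: "T ! (r - 1) \<noteq> []" and sh2: "r < length T \<longrightarrow> length (T ! r) < length (T ! (r - 1))"
    and Nb: "4 * k + 8 \<le> N" and rif: "rev_ins_from T r = (T', a)"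
    and QB: "\<forall>j. 1 \<le> j \<and> j \<le> k \<and> j \<notin> entries T \<longrightarrow> Q j \<le> 2 * k"
  defines "Dd \<equiv> \<lambda>j. if j \<notin> entries T then (if j = 0 then 0 else Q j) else N + 1 - rowof T j"
  shows "a \<in> entries T \<and> 1 \<le> a \<and> rowof T a = 1 \<and> tab T' \<and> entries T' = entries T - {a} \<and> length T' = length T \<and>
    (\<forall>q\<ge>1. length (row T' q) = (if q = r then length (row T r) - 1 else length (row T q))) \<and>
    (\<forall>j. j \<in> entries T' \<longrightarrow> j < a \<longrightarrow> rowof T' j = rowof T j) \<and> row_ins a T' = (T, r) \<and>
    trav N (N + 1 - r) (map Dd (rev [1..<Suc k])) =
      (map (\<lambda>j. if j = a then 1 else if j \<notin> entries T then Q j else N + 1 - rowof T' j) (rev [a..<Suc k])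
        @ fst (trav N 1 (map Dd (rev [1..<a]))), snd (trav N 1 (map Dd (rev [1..<a]))))"
proof -
  define rw where "rw = T ! (r - 1)"
  define x where "x = last rw"
  define T0 where "T0 = T[r - 1 := butlast rw]"
  have rl': "r - 1 < length T" using r1 rl by simp
  have rwne: "rw \<noteq> []" using ne rw_def by simp
  have rb: "rev_bump T0 (r - 1) x = (T', a)" using rif rev_ins_from_eq[of T r] unfolding T0_def x_def rw_def by simp
  have dT: "distinct (concat T)" using tT tab_dist by blast
  have srw: "sorted_wrt (<) rw" using tab_rows[OF tT] rl' rw_def by simp
  have drw: "distinct rw" using srw strict_sorted_iff by blast
  have xrw: "x \<in> set rw" using rwne x_def by simp
  have xT: "x \<in> entries T" using xrw rl' rw_def entries_def by force
  have rxT: "rowof T x = r" using rowof_Suc_iff[OF dT, of x "r - 1"] xrw rl' r1 rw_def by simp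
  have xmax: "\<forall>z\<in>set rw. z \<le> x" using last_max[OF srw rwne] x_def by blast
  have tT0: "tab T0" unfolding T0_def rw_def by (rule tab_butlast[OF tT r1 rl ne sh2])
  have dT0: "distinct (concat T0)" using tT0 tab_dist by blast
  have setb: "set (butlast rw) = set rw - {x}"
  proof -
    have "rw = butlast rw @ [x]" using rwne x_def by simp
    then have "distinct (butlast rw @ [x])" using drw by metis
    then have "x \<notin> set (butlast rw)" by simp
    moreover have "set (butlast rw @ [x]) = set rw" using rwne x_def by simp
    then have "set rw = insert x (set (butlast rw))" by simp
    ultimately show ?thesis by auto
  qed
  have eT0: "entries T0 = entries T - {x}"
  proof -
    have e1: "entries T0 = entries (take (r - 1) T) \<union> set (butlast rw) \<union> entries (drop (Suc (r - 1)) T)"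
      unfolding T0_def by (rule entries_upd_decomp(1)[OF rl'])
    have e2: "entries T = entries (take (r - 1) T) \<union> set rw \<union> entries (drop (Suc (r - 1)) T)"
      unfolding rw_def by (rule entries_upd_decomp(2)[OF rl'])
    have Tsp: "T = take (r - 1) T @ rw # drop (Suc (r - 1)) T" unfolding rw_def using rl' by (rule id_take_nth_drop)
    have "distinct (concat (take (r - 1) T) @ rw @ concat (drop (Suc (r - 1)) T))"
      using dT Tsp by (metis concat.simps(2) concat_append)
    then have "x \<notin> entries (take (r - 1) T) \<union> entries (drop (Suc (r - 1)) T)" using xrw by (auto simp: entries_conv)
    then show ?thesis using e1 e2 setb by auto
  qed
  have xT0: "x \<notin> entries T0" using eT0 by simp
  have lT0: "length T0 = length T" unfolding T0_def by simp
  have rowT0: "\<And>q. 1 \<le> q \<Longrightarrow> row T0 q = (if q = r then butlast rw else row T q)"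
    unfolding T0_def row_def rw_def using rl' r1 by (auto simp: nth_list_update)
  have ro0: "\<And>j. j \<noteq> x \<Longrightarrow> rowof T0 j = rowof T j"
  proof (rule rowof_eq_rows[OF dT dT0])
    fix j assume j: "j \<noteq> x"
    show "\<forall>q\<ge>1. j \<in> set (row T q) \<longleftrightarrow> j \<in> set (row T0 q)"
      using rowT0 setb j rl r1 by (auto simp: row_def rw_def)
  qed
  have z0: "0 \<notin> entries T0" using eT0 eT by auto
  have rowlen0: "\<forall>q\<ge>1. length (row T0 q) = (if q = r then length (row T r) - 1 else length (row T q))"
    using rowT0 rl r1 by (auto simp: row_def rw_def)
  have x1: "1 \<le> x" "x \<le> k" using xT eT by auto
  have QBx: "\<And>j. j \<notin> entries T \<Longrightarrow> j \<le> k \<Longrightarrow> Dd j \<le> 2 * k"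
  proof -
    fix j assume j: "j \<notin> entries T" "j \<le> k"
    show "Dd j \<le> 2 * k"
    proof (cases "j = 0")
      case True then show ?thesis using j unfolding Dd_def by simp
    next
      case False then show ?thesis using j QB unfolding Dd_def by simp
    qed
  qed
  have Tk: "length T < N" using lT Nb by simp
  have qc0: "2 \<le> r \<Longrightarrow> Qc T0 (r - 1) x"
  proof -
    assume r2: "2 \<le> r"
    have s2: "Suc (r - 1 - 1) < length T" using r2 rl by simp
    have e1: "Suc (r - 1 - 1) = r - 1" using r2 by simp
    note tc = tab_col[OF tT s2]
    have c0: "length rw - 1 < length rw" using rwne by simp
    have lx: "rw ! (length rw - 1) = x" using rwne x_def by (simp add: last_conv_nth)
    have T0a: "T0 ! (r - 1 - 1) = T ! (r - 1 - 1)" unfolding T0_def using r2 by simp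
    have T0b: "T0 ! (r - 1) = butlast rw" unfolding T0_def using rl' by simp
    show ?thesis unfolding Qc_def
    proof (rule exI[of _ "length rw - 1"], intro conjI impI)
      show "length rw - 1 < length (T0 ! (r - 1 - 1))" using tc c0 e1 T0a rw_def by simp
      have "\<forall>c<length (T ! Suc (r - 1 - 1)). T ! (r - 1 - 1) ! c < T ! Suc (r - 1 - 1) ! c" using tc by blast
      then have "\<forall>c<length rw. T ! (r - 1 - 1) ! c < rw ! c" unfolding e1 rw_def .
      then have "T ! (r - 1 - 1) ! (length rw - 1) < rw ! (length rw - 1)" using c0 by blast
      then show "T0 ! (r - 1 - 1) ! (length rw - 1) < x" using T0a lx by simp
      show "r - 1 < length T0 \<and> length rw - 1 < length (T0 ! (r - 1)) \<Longrightarrow> x < T0 ! (r - 1) ! (length rw - 1)"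
        using T0b by simp
    qed
  qed
  have qc0': "1 \<le> r - 1 \<longrightarrow> Qc T0 (r - 1) x" using qc0 by simp
  have inv: "row_ins a T' = (T, r)"
  proof -
    have ri: "row_ins a T' = (take (r - 1) T0 @ fst (row_ins x (drop (r - 1) T0)), r - 1 + snd (row_ins x (drop (r - 1) T0)))"
      by (rule rb_inverse[OF tT0 xT0 _ qc0' rb]) (use lT0 rl in simp)
    have dr: "drop (r - 1) T0 = butlast rw # drop r T"
    proof -
      have "drop (r - 1) T0 = T0 ! (r - 1) # drop (Suc (r - 1)) T0" using rl' lT0 by (simp add: Cons_nth_drop_Suc)
      moreover have "T0 ! (r - 1) = butlast rw" unfolding T0_def using rl' by simp
      moreover have "drop (Suc (r - 1)) T0 = drop r T" unfolding T0_def using r1 by simp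
      ultimately show ?thesis by simp
    qed
    have all: "\<forall>y\<in>set (butlast rw). y < x" using setb xmax by fastforce
    have "row_ins x (butlast rw # drop r T) = ((butlast rw @ [x]) # drop r T, 1)" using all by simp
    moreover have "butlast rw @ [x] = rw" using rwne x_def by simp
    moreover have "take (r - 1) T0 = take (r - 1) T" unfolding T0_def by simp
    moreover have "take (r - 1) T @ rw # drop r T = T"
    proof -
      have "T = take (r - 1) T @ T ! (r - 1) # drop (Suc (r - 1)) T" using rl' by (rule id_take_nth_drop)
      then show ?thesis using r1 rw_def by simp
    qed
    ultimately show ?thesis using ri dr r1 by simp
  qed
  have split1: "rev [1..<Suc k] = rev [Suc x..<Suc k] @ x # rev [1..<x]" using x1 by (intro rev_upt_split3) auto
  define p0 where "p0 = N + 1 - r"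
  have nomeet: "\<forall>v\<in>set (map Dd (rev [Suc x..<Suc k])). v \<noteq> p0"
  proof
    fix v assume "v \<in> set (map Dd (rev [Suc x..<Suc k]))"
    then obtain j where j0: "j \<in> set (rev [Suc x..<Suc k])" "v = Dd j" by (auto simp only: set_map)
    then have j: "x < j" "j \<le> k" by auto
    show "v \<noteq> p0"
    proof (cases "j \<in> entries T")
      case True
      have "rowof T j \<noteq> r"
      proof
        assume "rowof T j = r"
        then have "j \<in> set rw" using rowof_Suc_iff[OF dT, of j "r - 1"] r1 rw_def by simp
        then show False using xmax j by force
      qed
      moreover have "1 \<le> rowof T j" "rowof T j \<le> length T" using rowof_bound[OF True] by auto
      ultimately show ?thesis using j0 True Tk rl unfolding Dd_def p0_def by auto
    next
      case False
      then have "Dd j \<le> 2 * k" using QBx j by simp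
      then show ?thesis using j0 Nb rl lT unfolding p0_def by linarith
    qed
  qed
  have tnm: "trav N p0 (map Dd (rev [Suc x..<Suc k])) = (map Dd (rev [Suc x..<Suc k]), p0)"
    by (rule trav_nomeet[OF nomeet])
  have Ddx: "Dd x = p0" unfolding Dd_def p0_def using xT rxT by simp
  have trav1: "trav N p0 (map Dd (rev [1..<Suc k])) =
      (map Dd (rev [Suc x..<Suc k]) @ tout N p0 p0 # fst (trav N (tnx N p0 p0) (map Dd (rev [1..<x]))),
       snd (trav N (tnx N p0 p0) (map Dd (rev [1..<x]))))"
    unfolding split1 map_append list.map(2) trav_append tnm Ddx by (simp add: Let_def)
  define G where "G = (\<lambda>j. if j = a then 1 else if j \<notin> entries T then Q j else N + 1 - rowof T' j)"
  show ?thesis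
  proof (cases "r = 1")
    case True
    have rb0: "T' = T0" "a = x" using rb True by auto
    have tn: "tnx N p0 p0 = 1" "tout N p0 p0 = 1" using True unfolding p0_def by (auto simp: tnx_def tout_def)
    have sp: "rev [a..<Suc k] = rev [Suc x..<Suc k] @ [x]" using rb0 x1 rev_upt_split3[of x x "Suc k"] by simp
    have eq: "map Dd (rev [Suc x..<Suc k]) = map G (rev [Suc x..<Suc k])"
    proof (rule map_cong[OF refl])
      fix j assume "j \<in> set (rev [Suc x..<Suc k])"
      then have j: "x < j" by auto
      show "Dd j = G j" using j rb0 ro0[of j] unfolding Dd_def G_def by auto
    qed
    have tr: "trav N (N + 1 - r) (map Dd (rev [1..<Suc k])) =
      (map G (rev [a..<Suc k]) @ fst (trav N 1 (map Dd (rev [1..<a]))), snd (trav N 1 (map Dd (rev [1..<a]))))"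
      using trav1[unfolded p0_def] tn[unfolded p0_def] sp eq rb0 unfolding G_def by simp
    show ?thesis unfolding G_def[symmetric]
      using tr rb0 xT x1 rxT True tT0 eT0 lT0 rowlen0 ro0 inv by auto
  next
    case False
    then have r2: "2 \<le> r" using r1 by simp
    have pre1: "\<forall>j<x. j \<in> entries T0 \<longrightarrow> Dd j = N + 1 - rowof T0 j"
      using eT0 ro0 unfolding Dd_def by auto
    have pre2: "\<forall>j<x. j \<notin> entries T0 \<longrightarrow> Dd j < N + 1 - length T0"
    proof (intro allI impI)
      fix j assume j: "j < x" "j \<notin> entries T0"
      then have "j \<notin> entries T" "j \<le> k" using eT0 x1 by auto
      then have "Dd j \<le> 2 * k" using QBx by simp
      then show "Dd j < N + 1 - length T0" using lT0 lT Nb by linarith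
    qed
    have LBr: "a < x \<and> a \<in> entries T0 \<and> tab T' \<and> entries T' = insert x (entries T0 - {a}) \<and> length T' = length T0 \<and>
      (\<forall>i<length T0. length (T' ! i) = length (T0 ! i)) \<and> rowof T' x = r - 1 \<and>
      (\<forall>j. j \<noteq> x \<longrightarrow> (j < a \<or> x < j) \<longrightarrow> rowof T' j = rowof T0 j) \<and> rowof T0 a = 1 \<and>
      trav N (N + 1 - (r - 1)) (map Dd (rev [1..<x])) =
      (map (\<lambda>j. if j = a then 1 else if j \<in> entries T' then N + 1 - rowof T' j else Dd j) (rev [a..<x])
        @ fst (trav N 1 (map Dd (rev [1..<a]))), snd (trav N 1 (map Dd (rev [1..<a]))))"
      by (rule LB[OF tT0 xT0 _ _ qc0[OF r2] rb _ z0 pre1 pre2]) (use r2 lT0 rl Tk in auto)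
    have ax: "a < x" "a \<in> entries T" "a \<noteq> x" using LBr eT0 by auto
    have a1: "1 \<le> a" using ax eT by auto
    have eT': "entries T' = entries T - {a}" using LBr eT0 xT ax by auto
    have ra: "rowof T a = 1" using LBr ro0[of a] ax by simp
    have rx': "rowof T' x = r - 1" using LBr by simp
    have ro': "\<And>j. j \<noteq> x \<Longrightarrow> (j < a \<or> x < j) \<Longrightarrow> rowof T' j = rowof T j"
    proof -
      fix j assume j: "j \<noteq> x" "j < a \<or> x < j"
      have "\<forall>j. j \<noteq> x \<longrightarrow> (j < a \<or> x < j) \<longrightarrow> rowof T' j = rowof T0 j" using LBr by blast
      then have "rowof T' j = rowof T0 j" using j by blast
      then show "rowof T' j = rowof T j" using ro0 j by simp
    qed
    have rowlen': "\<forall>q\<ge>1. length (row T' q) = (if q = r then length (row T r) - 1 else length (row T q))"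
    proof (intro allI impI)
      fix q :: nat assume q: "1 \<le> q"
      have "length (row T' q) = length (row T0 q)" using LBr q by (auto simp: row_def)
      then show "length (row T' q) = (if q = r then length (row T r) - 1 else length (row T q))" using rowlen0 q by simp
    qed
    have tn: "tnx N p0 p0 = N + 1 - (r - 1)" "tout N p0 p0 = N + 1 - (r - 1)"
      using r2 Tk rl unfolding p0_def by (auto simp: tnx_def tout_def)
    have sp: "rev [a..<Suc k] = rev [Suc x..<Suc k] @ x # rev [a..<x]" using ax x1 by (intro rev_upt_split3) auto
    have eq1: "map Dd (rev [Suc x..<Suc k]) = map G (rev [Suc x..<Suc k])"
    proof (rule map_cong[OF refl])
      fix j assume "j \<in> set (rev [Suc x..<Suc k])"
      then have j: "x < j" by auto
      show "Dd j = G j" using j ax ro'[of j] unfolding Dd_def G_def by auto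
    qed
    have eq2: "map (\<lambda>j. if j = a then 1 else if j \<in> entries T' then N + 1 - rowof T' j else Dd j) (rev [a..<x]) = map G (rev [a..<x])"
    proof (rule map_cong[OF refl])
      fix j assume "j \<in> set (rev [a..<x])"
      then have j: "a \<le> j" "j < x" by auto
      show "(if j = a then 1 else if j \<in> entries T' then N + 1 - rowof T' j else Dd j) = G j"
        using j eT' a1 unfolding Dd_def G_def by auto
    qed
    have Gx: "G x = N + 1 - (r - 1)" using ax xT rx' unfolding G_def by simp
    have tr: "trav N (N + 1 - r) (map Dd (rev [1..<Suc k])) =
      (map G (rev [a..<Suc k]) @ fst (trav N 1 (map Dd (rev [1..<a]))), snd (trav N 1 (map Dd (rev [1..<a]))))"
    proof -
      have "trav N p0 (map Dd (rev [1..<Suc k])) =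
        (map Dd (rev [Suc x..<Suc k]) @ (N + 1 - (r - 1)) # (map (\<lambda>j. if j = a then 1 else if j \<in> entries T' then N + 1 - rowof T' j else Dd j) (rev [a..<x])
          @ fst (trav N 1 (map Dd (rev [1..<a])))), snd (trav N 1 (map Dd (rev [1..<a]))))"
        using trav1 tn LBr by simp
      then show ?thesis unfolding p0_def sp using eq1 eq2 Gx by simp
    qed
    show ?thesis unfolding G_def[symmetric]
      using tr ax a1 ra LBr lT0 eT' rowlen' ro' inv by auto
  qed
qed


lemma irun_take: "take (length xs) (snd (irun E Ap I S (xs @ zs))) = snd (irun E Ap I S xs)"
  using irun_append[of E Ap I S xs zs] irun_len[of E Ap I S xs] by simp

lemma INVd_Rem:
  assumes inv: "INVd N k sh T I d c" and r1: "1 \<le> r" and rem: "0 < sh r" and part: "is_partition (sh(r := sh r - 1))"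
    and Nb: "4 * k + 8 \<le> N" and rif: "rev_ins_from T r = (T', a)"
  shows "INVd N (Suc k) (sh(r := sh r - 1)) T' (I(a := Suc k, Suc k := a)) (psiD N (Rem r) # fst (trav N (psiP N (Rem r)) d))
           (snd (trav N (psiP N (Rem r)) d) # c)"
proof -
  define js where "js = rev [1..<Suc k]"
  define Ap where "Ap = Apf T"
  define E where "E = Ef N T"
  define I' where "I' = I(a := Suc k, Suc k := a)"
  have tT: "tab T" and eT: "entries T \<subseteq> {1..k}" and lT: "length T \<le> k" and shT: "\<forall>r\<ge>1. length (row T r) = sh r"
    and IT: "\<forall>j. 1 \<le> j \<and> j \<le> k \<and> j \<notin> entries T \<longrightarrow> 1 \<le> I j \<and> I j \<le> k"
    and dT: "d = snd (irun E Ap I T js)" and lc: "length c = k"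
    and cT: "\<forall>j. 1 \<le> j \<and> j \<le> k \<longrightarrow> j \<in> set (row (fst (irun E Ap I T js)) (c ! (k - j)))"
    using inv unfolding INVd_def js_def Ap_def E_def by auto
  have rowr: "0 < length (row T r)" using shT r1 rem by simp
  have rl: "r \<le> length T" using rowr by (auto simp: row_def split: if_splits)
  have rowr': "row T r = T ! (r - 1)" using r1 rl by (simp add: row_def)
  have ne: "T ! (r - 1) \<noteq> []" using rowr rowr' by auto
  have sh2: "r < length T \<longrightarrow> length (T ! r) < length (T ! (r - 1))"
  proof
    assume rlt: "r < length T"
    have "(sh(r := sh r - 1)) (Suc r) \<le> (sh(r := sh r - 1)) r" using part r1 unfolding is_partition_def by blast
    then have "sh (Suc r) \<le> sh r - 1" by simp
    moreover have "sh (Suc r) = length (T ! r)"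
    proof -
      have "length (row T (Suc r)) = sh (Suc r)" using shT by simp
      moreover have "row T (Suc r) = T ! r" using rlt by (simp add: row_def)
      ultimately show ?thesis by simp
    qed
    moreover have "sh r = length (T ! (r - 1))"
    proof -
      have "length (row T r) = sh r" using shT r1 by blast
      then show ?thesis using rowr' by simp
    qed
    ultimately show "length (T ! r) < length (T ! (r - 1))" using ne by (cases "T ! (r - 1)") auto
  qed
  have djs: "distinct js" unfolding js_def by simp
  have ljs: "length js = k" unfolding js_def by simp
  obtain Q where Q: "\<forall>E0. snd (irun E0 Ap I T js) = map (\<lambda>j. if Ap j then Q j else E0 j) js"
    and Qb: "\<forall>j\<in>set js. Ap j \<longrightarrow> 1 \<le> Q j \<and> Q j \<le> length T + length js"
    using irun_Q[OF djs, of Ap I T] by blast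
  have QB: "\<forall>j. 1 \<le> j \<and> j \<le> k \<and> j \<notin> entries T \<longrightarrow> Q j \<le> 2 * k"
    using Qb lT ljs unfolding js_def Ap_def Apf_def by auto
  define Dd where "Dd = (\<lambda>j. if j \<notin> entries T then (if j = 0 then 0 else Q j) else N + 1 - rowof T j)"
  have K: "a \<in> entries T \<and> 1 \<le> a \<and> rowof T a = 1 \<and> tab T' \<and> entries T' = entries T - {a} \<and> length T' = length T \<and>
    (\<forall>q\<ge>1. length (row T' q) = (if q = r then length (row T r) - 1 else length (row T q))) \<and>
    (\<forall>j. j \<in> entries T' \<longrightarrow> j < a \<longrightarrow> rowof T' j = rowof T j) \<and> row_ins a T' = (T, r) \<and>
    trav N (N + 1 - r) (map Dd (rev [1..<Suc k])) =
      (map (\<lambda>j. if j = a then 1 else if j \<notin> entries T then Q j else N + 1 - rowof T' j) (rev [a..<Suc k])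
        @ fst (trav N 1 (map Dd (rev [1..<a]))), snd (trav N 1 (map Dd (rev [1..<a]))))"
    unfolding Dd_def by (rule Rem_K[OF tT eT lT r1 rl ne sh2 Nb rif QB])
  have aT: "a \<in> entries T" "1 \<le> a" "a \<le> k" using K eT by auto
  have eT': "entries T' = entries T - {a}" using K by simp
  have ro': "\<And>j. j \<in> entries T' \<Longrightarrow> j < a \<Longrightarrow> rowof T' j = rowof T j" using K by blast
  have rins: "row_ins a T' = (T, r)" using K by simp
  define xs where "xs = rev [Suc a..<Suc k]"
  define ys where "ys = rev [1..<a]"
  have jsp: "js = xs @ a # ys" unfolding js_def xs_def ys_def using aT by (intro rev_upt_split3) auto
  have dD: "d = map Dd js"
  proof -
    have "d = map (\<lambda>j. if Ap j then Q j else E j) js" using dT Q by simp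
    also have "\<dots> = map Dd js"
    proof (rule map_cong[OF refl])
      fix j assume "j \<in> set js"
      then have "1 \<le> j" unfolding js_def by auto
      then show "(if Ap j then Q j else E j) = Dd j" unfolding Dd_def Ap_def Apf_def E_def Ef_def by auto
    qed
    finally show ?thesis .
  qed
  define S1 where "S1 = fst (irun E Ap I T xs)"
  have Apa: "\<not> Ap a" using aT unfolding Ap_def Apf_def by simp
  have old: "irun E Ap I T js = (fst (irun E Ap I S1 ys), snd (irun E Ap I T xs) @ E a # snd (irun E Ap I S1 ys))"
    unfolding jsp irun_append S1_def[symmetric] using Apa by simp
  have dys: "map Dd ys = snd (irun E Ap I S1 ys)"
  proof -
    have "map Dd xs @ Dd a # map Dd ys = snd (irun E Ap I T xs) @ E a # snd (irun E Ap I S1 ys)"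
      using dD dT old jsp by simp
    moreover have "length (map Dd xs) = length (snd (irun E Ap I T xs))" by (simp add: irun_len)
    ultimately show ?thesis by (simp add: append_eq_append_conv)
  qed
  have S1e: "entries S1 \<subseteq> {1..k}"
  proof -
    have "entries S1 = entries T \<union> I ` {j \<in> set xs. Ap j}" unfolding S1_def using irun_props by blast
    moreover have "I ` {j \<in> set xs. Ap j} \<subseteq> {1..k}" using IT unfolding xs_def Ap_def Apf_def by fastforce
    ultimately show ?thesis using eT by auto
  qed
  have S1M: "\<forall>y\<in>entries S1. y < Suc k" using S1e by auto
  have M: "fst (trav N 1 (snd (irun E Ap I S1 ys))) = snd (irun E Ap I (add_to_row S1 1 (Suc k)) ys)
    \<and> fst (irun E Ap I (add_to_row S1 1 (Suc k)) ys) = add_to_row (fst (irun E Ap I S1 ys)) (snd (trav N 1 (snd (irun E Ap I S1 ys)))) (Suc k)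
    \<and> 1 \<le> snd (trav N 1 (snd (irun E Ap I S1 ys))) \<and> snd (trav N 1 (snd (irun E Ap I S1 ys))) \<le> 1 + length ys"
  proof (rule irun_trav_M[where B = "N + 1 - k"])
    show "\<forall>y\<in>entries S1. y < Suc k" by (rule S1M)
    show "\<forall>j\<in>set ys. Ap j \<longrightarrow> I j < Suc k" using IT aT unfolding ys_def Ap_def Apf_def by fastforce
    show "(1::nat) \<le> 1" by simp
    show "1 \<le> Suc (length S1)" by simp
    show "\<forall>j\<in>set ys. \<not> Ap j \<longrightarrow> N + 1 - k \<le> E j"
    proof (intro ballI impI)
      fix j assume "\<not> Ap j"
      then have "rowof T j \<le> k" using rowof_bound[of j T] lT by (simp add: Ap_def Apf_def)
      then show "N + 1 - k \<le> E j" by (simp add: E_def Ef_def)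
    qed
    have lys: "length ys \<le> k" using aT unfolding ys_def by simp
    show "1 + length ys < N + 1 - k" using lys Nb by linarith
    show "1 + length ys < N" using lys Nb by linarith
  qed
  define P where "P = fst (irun E Ap I S1 ys)"
  define p' where "p' = snd (trav N 1 (snd (irun E Ap I S1 ys)))"
  define Y' where "Y' = snd (irun E Ap I (add_to_row S1 1 (Suc k)) ys)"
  have Pold: "fst (irun E Ap I T js) = P" using old P_def by simp
  define Ap' where "Ap' = Apf T'"
  define E' where "E' = Ef N T'"
  have kT': "Suc k \<notin> entries T'" using eT' eT by auto
  have new1: "irun E' Ap' I' T' (rev [1..<Suc (Suc k)]) = (fst (irun E' Ap' I' T js), r # snd (irun E' Ap' I' T js))"
    unfolding js_Suc js_def[symmetric] using kT' rins by (simp add: Ap'_def Apf_def I'_def)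
  have congx: "irun E' Ap' I' T xs = irun E' Ap I T xs"
  proof (rule irun_cong)
    show "\<forall>j\<in>set xs. Ap' j = Ap j \<and> (Ap' j \<longrightarrow> I' j = I j) \<and> (\<not> Ap' j \<longrightarrow> E' j = E' j)"
    proof
      fix j assume "j \<in> set xs"
      then have j: "a < j" "j \<le> k" unfolding xs_def by auto
      have "Ap' j = Ap j" using eT' j unfolding Ap'_def Ap_def Apf_def by auto
      moreover have "I' j = I j" using j unfolding I'_def by auto
      ultimately show "Ap' j = Ap j \<and> (Ap' j \<longrightarrow> I' j = I j) \<and> (\<not> Ap' j \<longrightarrow> E' j = E' j)" by blast
    qed
  qed
  have fx: "fst (irun E' Ap I T xs) = S1" unfolding S1_def by (rule irun_fst_E)
  have sx: "snd (irun E' Ap I T xs) = map (\<lambda>j. if Ap j then Q j else E' j) xs"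
  proof -
    have "snd (irun E' Ap I T xs) = take (length xs) (snd (irun E' Ap I T (xs @ a # ys)))" by (simp add: irun_take)
    also have "\<dots> = take (length xs) (map (\<lambda>j. if Ap j then Q j else E' j) (xs @ a # ys))" using Q jsp by simp
    finally show ?thesis by simp
  qed
  have Apa': "Ap' a" "I' a = Suc k" using eT' aT unfolding Ap'_def Apf_def I'_def by auto
  have ria: "row_ins (Suc k) S1 = (add_to_row S1 1 (Suc k), 1)" using row_ins_max[OF S1M] by simp
  have congy: "irun E' Ap' I' (add_to_row S1 1 (Suc k)) ys = irun E Ap I (add_to_row S1 1 (Suc k)) ys"
  proof (rule irun_cong)
    show "\<forall>j\<in>set ys. Ap' j = Ap j \<and> (Ap' j \<longrightarrow> I' j = I j) \<and> (\<not> Ap' j \<longrightarrow> E' j = E j)"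
    proof
      fix j assume "j \<in> set ys"
      then have j: "1 \<le> j" "j < a" unfolding ys_def by auto
      have "Ap' j = Ap j" using eT' j unfolding Ap'_def Ap_def Apf_def by auto
      moreover have "I' j = I j" using j aT unfolding I'_def by auto
      moreover have "\<not> Ap' j \<longrightarrow> E' j = E j" using ro'[of j] j unfolding Ap'_def Apf_def E'_def E_def Ef_def by auto
      ultimately show "Ap' j = Ap j \<and> (Ap' j \<longrightarrow> I' j = I j) \<and> (\<not> Ap' j \<longrightarrow> E' j = E j)" by blast
    qed
  qed
  have new2: "irun E' Ap' I' T js = (add_to_row P p' (Suc k), map (\<lambda>j. if Ap j then Q j else E' j) xs @ 1 # Y')"
  proof -
    have "irun E' Ap' I' T js = (fst (irun E' Ap' I' (fst (irun E' Ap' I' T xs)) (a # ys)),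
        snd (irun E' Ap' I' T xs) @ snd (irun E' Ap' I' (fst (irun E' Ap' I' T xs)) (a # ys)))"
      unfolding jsp by (rule irun_append)
    also have "\<dots> = (fst (irun E Ap I (add_to_row S1 1 (Suc k)) ys),
        map (\<lambda>j. if Ap j then Q j else E' j) xs @ 1 # snd (irun E Ap I (add_to_row S1 1 (Suc k)) ys))"
      using congx fx sx Apa' ria congy by simp
    finally show ?thesis using M unfolding P_def p'_def Y'_def by simp
  qed
  have pD: "psiD N (Rem r) = r" "psiP N (Rem r) = N + 1 - r" by (simp_all add: psiD_def psiP_def)
  have travd: "trav N (N + 1 - r) d = (map (\<lambda>j. if Ap j then Q j else E' j) xs @ 1 # Y', p')"
  proof -
    have sp: "rev [a..<Suc k] = xs @ [a]" unfolding xs_def using aT rev_upt_split3[of a a "Suc k"] by simp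
    have eqx: "map (\<lambda>j. if j = a then 1 else if j \<notin> entries T then Q j else N + 1 - rowof T' j) xs
        = map (\<lambda>j. if Ap j then Q j else E' j) xs"
    proof (rule map_cong[OF refl])
      fix j assume "j \<in> set xs"
      then have "a < j" unfolding xs_def by auto
      then show "(if j = a then 1 else if j \<notin> entries T then Q j else N + 1 - rowof T' j) = (if Ap j then Q j else E' j)"
        unfolding Ap_def Apf_def E'_def Ef_def by auto
    qed
    have "trav N (N + 1 - r) d = trav N (N + 1 - r) (map Dd (rev [1..<Suc k]))" using dD js_def by simp
    also have "\<dots> = (map (\<lambda>j. if Ap j then Q j else E' j) xs @ [1] @ fst (trav N 1 (map Dd ys)), snd (trav N 1 (map Dd ys)))"
      using K sp eqx unfolding ys_def by simp
    finally show ?thesis using dys M unfolding Y'_def p'_def by simp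
  qed
  have Ipr: "\<forall>j. 1 \<le> j \<and> j \<le> Suc k \<and> j \<notin> entries T' \<longrightarrow> 1 \<le> I' j \<and> I' j \<le> Suc k"
  proof (intro allI impI)
    fix j assume j: "1 \<le> j \<and> j \<le> Suc k \<and> j \<notin> entries T'"
    show "1 \<le> I' j \<and> I' j \<le> Suc k"
    proof (cases "j = Suc k")
      case True then show ?thesis using aT by (simp add: I'_def)
    next
      case F: False
      show ?thesis
      proof (cases "j = a")
        case True then show ?thesis using aT by (simp add: I'_def)
      next
        case False
        then have "1 \<le> j \<and> j \<le> k \<and> j \<notin> entries T" using j F eT' by auto
        then show ?thesis using IT False F by (fastforce simp: I'_def)
      qed
    qed
  qed
  have p1: "1 \<le> p'" using M unfolding p'_def by simp
  have cl: "\<forall>j. 1 \<le> j \<and> j \<le> Suc k \<longrightarrow> j \<in> set (row (fst (irun E' Ap' I' T' (rev [1..<Suc (Suc k)]))) ((p' # c) ! (Suc k - j)))"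
    unfolding new1 fst_conv new2 using c_claim_step[OF cT[unfolded Pold] p1] by simp
  have dn: "psiD N (Rem r) # fst (trav N (psiP N (Rem r)) d) = snd (irun E' Ap' I' T' (rev [1..<Suc (Suc k)]))"
    unfolding new1 snd_conv new2 pD travd by simp
  have sn: "snd (trav N (psiP N (Rem r)) d) = p'" unfolding pD travd by simp
  have ent: "entries T' \<subseteq> {1..Suc k}" using eT' eT by auto
  have lT': "length T' \<le> Suc k" using K lT by simp
  have shT': "\<forall>q\<ge>1. length (row T' q) = (sh(r := sh r - 1)) q" using K shT by simp
  have tT': "tab T'" using K by simp
  show ?thesis unfolding INVd_def I'_def[symmetric] Ap'_def[symmetric] E'_def[symmetric] sn
    using tT' ent lT' shT' Ipr dn cl lc by simp
qed


lemma ddf_TI_snoc: "ddf_TI (bs @ [b]) = ddf_step (ddf_TI bs) (Suc (length bs), b)"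
proof -
  have e: "[1..<Suc (length (bs @ [b]))] = [1..<Suc (length bs)] @ [Suc (length bs)]" by simp
  have z: "zip ([1..<Suc (length bs)] @ [Suc (length bs)]) (bs @ [b]) = zip [1..<Suc (length bs)] bs @ zip [Suc (length bs)] [b]"
    by (rule zip_append) (simp del: upt_Suc)
  show ?thesis unfolding ddf_TI_def e z foldl_append by simp
qed

lemma shape_snoc: "shape (bs @ [b]) = shape_step (shape bs) b"
  by (simp add: shape_def)

definition valid :: "letter list \<Rightarrow> bool" where
  "valid bs \<longleftrightarrow> (\<forall>x\<in>set bs. x \<noteq> Add 0 \<and> x \<noteq> Rem 0) \<and> (\<forall>k<length bs. removal_ok (shape (take k bs)) (bs ! k))
     \<and> (\<forall>k\<le>length bs. is_partition (shape (take k bs)))"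

lemma valid_snoc:
  assumes "valid (bs @ [b])"
  shows "valid bs" "b \<noteq> Add 0" "b \<noteq> Rem 0" "removal_ok (shape bs) b" "is_partition (shape (bs @ [b]))"
proof -
  have a: "\<forall>x\<in>set (bs @ [b]). x \<noteq> Add 0 \<and> x \<noteq> Rem 0" "\<forall>k<length (bs @ [b]). removal_ok (shape (take k (bs @ [b]))) ((bs @ [b]) ! k)"
    "\<forall>k\<le>length (bs @ [b]). is_partition (shape (take k (bs @ [b])))" using assms unfolding valid_def by auto
  show "valid bs" unfolding valid_def
  proof (intro conjI allI impI)
    show "\<forall>x\<in>set bs. x \<noteq> Add 0 \<and> x \<noteq> Rem 0" using a(1) by simp
  next
    fix k assume k: "k < length bs"
    then show "removal_ok (shape (take k bs)) (bs ! k)" using a(2)[rule_format, of k] by (simp add: nth_append)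
  next
    fix k assume k: "k \<le> length bs"
    then show "is_partition (shape (take k bs))" using a(3)[rule_format, of k] by simp
  qed
  show "b \<noteq> Add 0" "b \<noteq> Rem 0" using a(1) by auto
  show "removal_ok (shape bs) b" using a(2)[rule_format, of "length bs"] by simp
  show "is_partition (shape (bs @ [b]))" using a(3)[rule_format, of "length (bs @ [b])"] by simp
qed

lemma Mset_valid: "bs \<in> Mset dm L lam \<Longrightarrow> valid bs \<and> length bs = L"
proof -
  assume m: "bs \<in> Mset dm L lam"
  have "\<forall>x\<in>set bs. x \<noteq> Add 0 \<and> x \<noteq> Rem 0"
  proof
    fix x assume "x \<in> set bs"
    then have "letter_ok dm x" using m unfolding Mset_def by auto
    then show "x \<noteq> Add 0 \<and> x \<noteq> Rem 0" by (cases x) auto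
  qed
  then show ?thesis using m unfolding Mset_def valid_def by auto
qed

definition INV :: "nat \<Rightarrow> letter list \<Rightarrow> bool" where
  "INV N bs \<longleftrightarrow> INVd N (length bs) (shape bs) (ddf_T bs) (ddf_I bs) (fst (vxr N bs)) (snd (vxr N bs))"

lemma INV_Nil: "INV N []"
proof -
  have "ddf_TI [] = ([], id)" by (simp add: ddf_TI_def)
  then have "ddf_T [] = []" by (simp add: ddf_T_def)
  moreover have "vxr N [] = ([], [])" by (simp add: vxr_def)
  moreover have "shape [] = (\<lambda>_. 0)" by (simp add: shape_def)
  ultimately show ?thesis unfolding INV_def INVd_def by (simp add: tab_def row_def)
qed

lemma INV_all: "valid bs \<Longrightarrow> 4 * length bs + 4 \<le> N \<Longrightarrow> INV N bs"
proof (induction bs rule: rev_induct)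
  case Nil
  show ?case by (rule INV_Nil)
next
  case (snoc b bs)
  note v = valid_snoc[OF snoc.prems(1)]
  define k where "k = length bs"
  obtain T I where TI: "ddf_TI bs = (T, I)" by fastforce
  obtain d c where dc: "vxr N bs = (d, c)" by fastforce
  have IH: "INVd N k (shape bs) T I d c"
    using snoc.IH[OF v(1)] snoc.prems(2) TI dc unfolding INV_def k_def ddf_T_def ddf_I_def by simp
  have Nb: "4 * k + 8 \<le> N" using snoc.prems(2) unfolding k_def by simp
  have TI': "ddf_TI (bs @ [b]) = ddf_step (T, I) (Suc k, b)" using ddf_TI_snoc TI k_def by simp
  have vx': "vxr N (bs @ [b]) = (psiD N b # fst (trav N (psiP N b) d), snd (trav N (psiP N b) d) # c)"
    using vxr_snoc[of N bs b] dc by (simp add: vxr_step_def)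
  have sh': "shape (bs @ [b]) = shape_step (shape bs) b" by (rule shape_snoc)
  have lk: "length (bs @ [b]) = Suc k" unfolding k_def by simp
  show ?case
  proof (cases b)
    case (Add r)
    have r1: "1 \<le> r" using v(2) Add by (cases r) auto
    have part: "is_partition ((shape bs)(r := shape bs r + 1))" using v(5) sh' Add by simp
    have "INVd N (Suc k) ((shape bs)(r := shape bs r + 1)) (add_to_row T r (Suc k)) I
        (psiD N (Add r) # fst (trav N (psiP N (Add r)) d)) (snd (trav N (psiP N (Add r)) d) # c)"
      by (rule INVd_Add[OF IH r1 part Nb])
    then show ?thesis unfolding INV_def lk using TI' vx' sh' Add by (simp add: ddf_T_def ddf_I_def)
  next
    case (Rem r)
    have r1: "1 \<le> r" using v(3) Rem by (cases r) auto
    have rem: "0 < shape bs r" using v(4) Rem by simp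
    have part: "is_partition ((shape bs)(r := shape bs r - 1))" using v(5) sh' Rem by simp
    obtain T' a where rif: "rev_ins_from T r = (T', a)" by fastforce
    have "INVd N (Suc k) ((shape bs)(r := shape bs r - 1)) T' (I(a := Suc k, Suc k := a))
        (psiD N (Rem r) # fst (trav N (psiP N (Rem r)) d)) (snd (trav N (psiP N (Rem r)) d) # c)"
      by (rule INVd_Rem[OF IH r1 rem part Nb rif])
    then show ?thesis unfolding INV_def lk using TI' vx' sh' Rem rif by (simp add: ddf_T_def ddf_I_def)
  next
    case Emp
    have "INVd N (Suc k) (shape bs) T (I(Suc k := Suc k))
        (psiD N Emp # fst (trav N (psiP N Emp) d)) (snd (trav N (psiP N Emp) d) # c)"
      by (rule INVd_Emp[OF IH Nb])
    then show ?thesis unfolding INV_def lk using TI' vx' sh' Emp by (simp add: ddf_T_def ddf_I_def)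
  qed
qed


lemma rev_js_nth': "t < L \<Longrightarrow> rev [1..<Suc L] ! t = L - t"
  by (simp del: upt_Suc add: rev_nth nth_upt)

lemma rev_js_nth: "1 \<le> i \<Longrightarrow> i \<le> L \<Longrightarrow> rev [1..<Suc L] ! (L - i) = i"
  using rev_js_nth'[of "L - i" L] by simp

theorem proposition57:
  fixes dm :: diamond and L :: nat and lam :: "nat \<Rightarrow> nat"
  assumes "is_partition lam"
  shows "\<exists>n0. \<forall>n\<ge>n0. \<forall>b\<in>Mset dm L lam. \<forall>d c.
     (rstep (2 * n))\<^sup>*\<^sup>* (Psi_word (2 * n) b) (map Du d @ map Pl c) \<longrightarrow>
       (let N = 2 * n; T = ddf_T b; P = ddf_P b; Q = ddf_Q b;
            A = {i \<in> {1..L}. 1 \<le> d ! (L - i) \<and> d ! (L - i) \<le> n}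
        in (\<forall>i\<in>{1..L}. i \<in> set (row P (c ! (L - i)))) \<and>
           (\<forall>j\<in>{1..L} - A. \<forall>r\<ge>1. j \<in> set (row T r) \<longleftrightarrow> d ! (L - j) + r = N + 1) \<and>
           (\<forall>i\<in>A. \<forall>r\<ge>1. L + 1 - i \<in> set (row Q r) \<longleftrightarrow> d ! (L - i) = r))"
proof (intro exI[of _ "2 * L + 2"] allI impI ballI)
  fix n b d c
  assume n: "2 * L + 2 \<le> n" and bM: "b \<in> Mset dm L lam"
    and rs: "(rstep (2 * n))\<^sup>*\<^sup>* (Psi_word (2 * n) b) (map Du d @ map Pl c)"
  define N where "N = 2 * n"
  have vb: "valid b" and lb: "length b = L" using Mset_valid[OF bM] by auto
  have Nb: "4 * length b + 4 \<le> N" using n lb unfolding N_def by simp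
  have inv: "INV N b" by (rule INV_all[OF vb Nb])
  have dc: "d = fst (vxr N b)" "c = snd (vxr N b)" using vxr_unique[OF rs[folded N_def]] by auto
  define T where "T = ddf_T b"
  define I where "I = ddf_I b"
  define js where "js = rev [1..<Suc L]"
  define E where "E = Ef N T"
  define Ap where "Ap = Apf T"
  have tT: "tab T" and eT: "entries T \<subseteq> {1..L}" and lT: "length T \<le> L"
    and dT: "d = snd (irun E Ap I T js)" and lc: "length c = L"
    and cT: "\<forall>j. 1 \<le> j \<and> j \<le> L \<longrightarrow> j \<in> set (row (fst (irun E Ap I T js)) (c ! (L - j)))"
    using inv dc lb unfolding INV_def INVd_def T_def I_def js_def E_def Ap_def by auto
  have dist: "distinct (concat T)" using tT tab_dist by blast
  have Ap': "ddf_Aprime b = {1..L} - entries T" unfolding ddf_Aprime_def T_def lb by simp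
  have fl: "rev (sorted_list_of_set (ddf_Aprime b)) = filter Ap js"
    unfolding Ap' sorted_Aprime js_def Ap_def Apf_def by simp
  note FP = foldl_PQ[of I "length b + 1" T "[]" Ap js E]
  have PQ: "ddf_PQ b = foldl (\<lambda>(P, Q) a. let (P', k) = row_ins (I a) P in (P', add_to_row Q k (length b + 1 - a))) (T, []) (filter Ap js)"
    unfolding ddf_PQ_def fl T_def I_def by simp
  have Peq: "ddf_P b = fst (irun E Ap I T js)" unfolding ddf_P_def PQ using FP by simp
  have Qmem: "\<And>v r. 1 \<le> r \<Longrightarrow> v \<in> set (row (ddf_Q b) r) \<longleftrightarrow>
      (\<exists>t<length js. Ap (js ! t) \<and> v = length b + 1 - js ! t \<and> r = snd (irun E Ap I T js) ! t)"
    unfolding ddf_Q_def PQ using FP by (simp add: row_def)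
  have djs: "distinct js" unfolding js_def by simp
  have ljs: "length js = L" unfolding js_def by simp
  obtain Q0 where Q0: "\<forall>E0. snd (irun E0 Ap I T js) = map (\<lambda>j. if Ap j then Q0 j else E0 j) js"
    and Q0b: "\<forall>j\<in>set js. Ap j \<longrightarrow> 1 \<le> Q0 j \<and> Q0 j \<le> length T + length js"
    using irun_Q[OF djs, of Ap I T] by blast
  have di: "\<And>i. 1 \<le> i \<Longrightarrow> i \<le> L \<Longrightarrow> d ! (L - i) = (if Ap i then Q0 i else E i)"
  proof -
    fix i assume i: "1 \<le> i" "i \<le> L"
    have "d ! (L - i) = (map (\<lambda>j. if Ap j then Q0 j else E j) js) ! (L - i)" using dT Q0 by simp
    also have "\<dots> = (if Ap i then Q0 i else E i)"
    proof -
      have l: "L - i < length js" using ljs i by simp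
      have "js ! (L - i) = i" using rev_js_nth[OF i] unfolding js_def .
      then show ?thesis using l by (simp del: upt_Suc)
    qed
    finally show "d ! (L - i) = (if Ap i then Q0 i else E i)" .
  qed
  have small: "\<And>i. 1 \<le> i \<Longrightarrow> i \<le> L \<Longrightarrow> Ap i \<Longrightarrow> 1 \<le> d ! (L - i) \<and> d ! (L - i) \<le> n"
  proof -
    fix i assume i: "1 \<le> i" "i \<le> L" "Ap i"
    have "i \<in> set js" using i unfolding js_def by auto
    then have "1 \<le> Q0 i \<and> Q0 i \<le> length T + length js" using Q0b i by blast
    then show "1 \<le> d ! (L - i) \<and> d ! (L - i) \<le> n" using di[OF i(1,2)] i(3) lT ljs n by simp
  qed
  have large: "\<And>i. 1 \<le> i \<Longrightarrow> i \<le> L \<Longrightarrow> \<not> Ap i \<Longrightarrow> d ! (L - i) = N + 1 - rowof T i \<and> 1 \<le> rowof T i \<and> rowof T i \<le> L \<and> n < d ! (L - i)"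
  proof -
    fix i assume i: "1 \<le> i" "i \<le> L" "\<not> Ap i"
    then have iT: "i \<in> entries T" unfolding Ap_def Apf_def by simp
    have rb: "1 \<le> rowof T i" "rowof T i \<le> L" using rowof_bound[OF iT] lT by auto
    have e: "d ! (L - i) = N + 1 - rowof T i" using di[OF i(1,2)] i(3) unfolding E_def Ef_def by simp
    show "d ! (L - i) = N + 1 - rowof T i \<and> 1 \<le> rowof T i \<and> rowof T i \<le> L \<and> n < d ! (L - i)"
      using e rb n unfolding N_def by simp
  qed
  define A where "A = {i \<in> {1..L}. 1 \<le> d ! (L - i) \<and> d ! (L - i) \<le> n}"
  have Aiff: "\<And>i. i \<in> {1..L} \<Longrightarrow> i \<in> A \<longleftrightarrow> Ap i"
  proof -
    fix i assume i: "i \<in> {1..L}"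
    show "i \<in> A \<longleftrightarrow> Ap i"
    proof
      assume "i \<in> A"
      then show "Ap i" using large[of i] i unfolding A_def by force
    next
      assume "Ap i"
      then show "i \<in> A" using small[of i] i unfolding A_def by auto
    qed
  qed
  have c1: "\<forall>i\<in>{1..L}. i \<in> set (row (ddf_P b) (c ! (L - i)))" using cT Peq by simp
  have c2: "\<forall>j\<in>{1..L} - A. \<forall>r\<ge>1. j \<in> set (row T r) \<longleftrightarrow> d ! (L - j) + r = N + 1"
  proof (intro ballI allI impI)
    fix j r assume j: "j \<in> {1..L} - A" and r: "(1::nat) \<le> r"
    then have nA: "\<not> Ap j" using Aiff by auto
    have jT: "j \<in> entries T" using nA unfolding Ap_def Apf_def by simp
    have l: "d ! (L - j) = N + 1 - rowof T j" "rowof T j \<le> L" using large[of j] j nA by auto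
    have "rowof T j \<le> N" using l(2) n unfolding N_def by simp
    then show "j \<in> set (row T r) \<longleftrightarrow> d ! (L - j) + r = N + 1"
      using in_row_iff[OF dist r, of j] jT l(1) by auto
  qed
  have c3: "\<forall>i\<in>A. \<forall>r\<ge>1. L + 1 - i \<in> set (row (ddf_Q b) r) \<longleftrightarrow> d ! (L - i) = r"
  proof (intro ballI allI impI)
    fix i r assume iA: "i \<in> A" and r: "(1::nat) \<le> r"
    have i: "1 \<le> i" "i \<le> L" using iA unfolding A_def by auto
    have Api: "Ap i" using Aiff iA i by auto
    have "L + 1 - i \<in> set (row (ddf_Q b) r) \<longleftrightarrow>
      (\<exists>t<L. Ap (js ! t) \<and> L + 1 - i = L + 1 - js ! t \<and> r = snd (irun E Ap I T js) ! t)"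
      using Qmem[OF r] lb ljs by simp
    also have "\<dots> \<longleftrightarrow> r = d ! (L - i)"
    proof
      assume "\<exists>t<L. Ap (js ! t) \<and> L + 1 - i = L + 1 - js ! t \<and> r = snd (irun E Ap I T js) ! t"
      then obtain t where t: "t < L" "L + 1 - i = L + 1 - js ! t" "r = snd (irun E Ap I T js) ! t" by blast
      have "js ! t = L - t" using rev_js_nth'[OF t(1)] unfolding js_def .
      then have "t = L - i" using t(1,2) i by simp
      then show "r = d ! (L - i)" using t(3) dT by simp
    next
      assume "r = d ! (L - i)"
      moreover have "js ! (L - i) = i" using rev_js_nth[OF i] unfolding js_def .
      ultimately show "\<exists>t<L. Ap (js ! t) \<and> L + 1 - i = L + 1 - js ! t \<and> r = snd (irun E Ap I T js) ! t"
        using Api i dT by (intro exI[of _ "L - i"]) auto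
    qed
    finally show "L + 1 - i \<in> set (row (ddf_Q b) r) \<longleftrightarrow> d ! (L - i) = r" by auto
  qed
  show "let N = 2 * n; T = ddf_T b; P = ddf_P b; Q = ddf_Q b;
            A = {i \<in> {1..L}. 1 \<le> d ! (L - i) \<and> d ! (L - i) \<le> n}
        in (\<forall>i\<in>{1..L}. i \<in> set (row P (c ! (L - i)))) \<and>
           (\<forall>j\<in>{1..L} - A. \<forall>r\<ge>1. j \<in> set (row T r) \<longleftrightarrow> d ! (L - j) + r = N + 1) \<and>
           (\<forall>i\<in>A. \<forall>r\<ge>1. L + 1 - i \<in> set (row Q r) \<longleftrightarrow> d ! (L - i) = r)"
    unfolding Let_def N_def[symmetric] T_def[symmetric] A_def[symmetric] using c1 c2 c3 by blast
qed


end
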